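(* In the entry–exit model described in the context (under all its standing assumptions (A1)–(A8)), the Bellman operator $T$ defined for $v \in \mathscr C$ by $$(Tv)(\phi,p) = \pi(\phi,p) + \beta \max\left\{0, \int v(\phi',p)\,\Gamma(\phi,\mathrm d\phi')\right\}$$ maps $\mathscr C$ into $\mathscr C$ and is a contraction on the metric space $(\mathscr C, d)$. Its unique fixed point $v^*$ is strictly increasing, and $v^*(\phi,p) < 0$ whenever $\phi = 0$ or $p = 0$.
   Context: Let $\mathbb R_+=[0,\infty)$ and let $\mathscr B$ denote its Borel sets; integrals are over $\mathbb R_+$. "Increasing" for functions on $\mathbb R_+^2$ refers to the componentwise order. Standing assumptions: (A1) A demand function $D$ on $\mathbb R_+$ is continuous and strictly decreasing with $D(0)=\infty$ and $\lim_{p\to\infty}D(p)=0$. (A2) Profit $\pi(\phi,p)$ and output $q(\phi,p)$ are functions of productivity $\phi\ge 0$ and price $p\ge0$; both are continuous and strictly increasing on $\mathbb R_+^2$; $q\ge 0$; and $\pi(\phi,p)<0$ if $\phi=0$ or $p=0$. (A3) $\Gamma$ is a Markov transition kernel on $\mathbb R_+$ which is monotone increasing (i.e. $\phi\mapsto\Gamma(\phi,[0,a])$ is decreasing for every $a\ge0$); $\Gamma^n$ denotes its $n$-step kernel. Moreover (a) for each $a>0$ and $\phi\ge0$ there is $n\in\mathbb N$ with $\Gamma^n(\phi,[0,a))>0$; (b) for each $p>0$ there exists $\phi\ge0$ with $\int \pi(\phi',p)\Gamma(\phi,\mathrm d\phi')\ge 0$. $\beta=1/(1+r)$ for a fixed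 $r>0$. (A4) $\gamma$ is a Borel probability measure on $\mathbb R_+$ with $\int q(\phi,p)\gamma(\mathrm d\phi)<\infty$ for all $p$ and $\gamma([0,a])>0$ for all $a>0$; $c_e>0$ is a fixed entry cost. (A5) There exists $p>0$ with $\int \pi(\phi,p)\gamma(\mathrm d\phi)\ge c_e$. (A6) For every $p$, $\sum_{t\ge0}\beta^t\int \pi(\phi',p)\Gamma^t(0,\mathrm d\phi')\le 0$. (A7) Let $\{\phi_t\}$ be the process with $\phi_0\sim\gamma$ and $\phi_{t+1}\sim\Gamma(\phi_t,\cdot)$. There is $\delta\in(\beta,1)$ with $\sum_{t\ge0}\delta^t\,\mathbb E\,\pi(\phi_t,p)<\infty$ for all $p\ge0$. Fix a constant $b$ with $\pi+b\ge1$ and set $\kappa(\phi,p):=\sum_{t\ge0}\delta^t\mathbb E_\phi[\pi(\phi_t,p)+b]$, where under $\mathbb E_\phi$ the process starts at $\phi_0=\phi$ and evolves via $\Gamma$; $\kappa$ is assumed finite everywhere (so $1\le\kappa<\infty$). For $f$ on $\mathbb R_+^2$ let $\|f\|_\kappa:=\sup|f/\kappa|$. Let $\mathscr C$ be the set of continuous, increasing functions $f$ on $\mathbb R_+^2$ with $\|f\|_\kappa<\infty$, with metric $d(v,w):=\|w-v\|_\kappa$. (A8) For every $u\in\mathscr C$, the map $(\phi,p)\mapsto\int u(\phi',p)\Gamma(\phi,\mathrm d\phi')$ is continuous. *)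

theory Defs
  imports "HOL-Probability.Probability"
begin

definition Rp :: "real measure" where
  "Rp = restrict_space borel {0..}"

definition Q :: "(real \<times> real) set" where
  "Q = {0..} \<times> {0..}"

primrec kpow :: "(real \<Rightarrow> real measure) \<Rightarrow> nat \<Rightarrow> real \<Rightarrow> real measure" where
  "kpow G 0 x = return Rp x"
| "kpow G (Suc n) x = bind (kpow G n x) G"

definition incr2 :: "(real \<Rightarrow> real \<Rightarrow> real) \<Rightarrow> bool" where
  "incr2 f \<longleftrightarrow> (\<forall>x y x' y'. 0 \<le> x \<and> 0 \<le> y \<and> x \<le> x' \<and> y \<le> y' \<longrightarrow> f x y \<le> f x' y')"

definition strict_incr2 :: "(real \<Rightarrow> real \<Rightarrow> real) \<Rightarrow> bool" where
  "strict_incr2 f \<longleftrightarrow> (\<forall>x y x' y'. 0 \<le> x \<and> 0 \<le> y \<and> x \<le> x' \<and> y \<le> y' \<and> (x, y) \<noteq> (x', y')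
      \<longrightarrow> f x y < f x' y')"

definition cont2 :: "(real \<Rightarrow> real \<Rightarrow> real) \<Rightarrow> bool" where
  "cont2 f \<longleftrightarrow> continuous_on Q (\<lambda>(x, y). f x y)"

definition kappa :: "(real \<Rightarrow> real measure) \<Rightarrow> (real \<Rightarrow> real \<Rightarrow> real) \<Rightarrow> real \<Rightarrow> real
    \<Rightarrow> real \<Rightarrow> real \<Rightarrow> real" where
  "kappa G prof b \<delta> x p = (\<Sum>t. \<delta> ^ t * (\<integral>y. prof y p + b \<partial>kpow G t x))"

definition knorm :: "(real \<Rightarrow> real \<Rightarrow> real) \<Rightarrow> (real \<Rightarrow> real \<Rightarrow> real) \<Rightarrow> real" where
  "knorm k f = (SUP z\<in>Q. \<bar>f (fst z) (snd z) / k (fst z) (snd z)\<bar>)"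

text \<open>The space C. Functions are represented on all of R x R but are required to vanish
  outside R_+^2 (extensional representation of functions on R_+^2).\<close>
definition CC :: "(real \<Rightarrow> real \<Rightarrow> real) \<Rightarrow> (real \<Rightarrow> real \<Rightarrow> real) set" where
  "CC k = {f. cont2 f \<and> incr2 f \<and> bdd_above ((\<lambda>z. \<bar>f (fst z) (snd z) / k (fst z) (snd z)\<bar>) ` Q)
            \<and> (\<forall>x y. (x, y) \<notin> Q \<longrightarrow> f x y = 0)}"

definition dk :: "(real \<Rightarrow> real \<Rightarrow> real) \<Rightarrow> (real \<Rightarrow> real \<Rightarrow> real) \<Rightarrow> (real \<Rightarrow> real \<Rightarrow> real) \<Rightarrow> real" where
  "dk k v w = knorm k (\<lambda>x y. w x y - v x y)"

definition bellman :: "(real \<Rightarrow> real measure) \<Rightarrow> (real \<Rightarrow> real \<Rightarrow> real) \<Rightarrow> real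
    \<Rightarrow> (real \<Rightarrow> real \<Rightarrow> real) \<Rightarrow> (real \<Rightarrow> real \<Rightarrow> real)" where
  "bellman G prof \<beta> v x p =
     (if 0 \<le> x \<and> 0 \<le> p then prof x p + \<beta> * max 0 (\<integral>y. v y p \<partial>G x) else 0)"

end

theory Submission
  imports Defs
begin

lemma space_Rp[simp]: "space Rp = {0..}"
  by (simp add: Rp_def space_restrict_space)

lemma sets_Rp: "sets Rp = sets (restrict_space borel {0..})"
  by (simp add: Rp_def)

locale kern =
  fixes G :: "real \<Rightarrow> real measure"
  assumes Gk: "G \<in> Rp \<rightarrow>\<^sub>M prob_algebra Rp"
begin

lemma Gsub: "G \<in> Rp \<rightarrow>\<^sub>M subprob_algebra Rp"
  using Gk by (rule measurable_prob_algebraD)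

lemma G_space: "0 \<le> x \<Longrightarrow> G x \<in> space (prob_algebra Rp)"
  using measurable_space[OF Gk, of x] by simp

lemma G_prob: "0 \<le> x \<Longrightarrow> prob_space (G x)"
  using G_space by (simp add: space_prob_algebra)

lemma G_sets: "0 \<le> x \<Longrightarrow> sets (G x) = sets Rp"
  using G_space by (simp add: space_prob_algebra)

lemma G_spc: "0 \<le> x \<Longrightarrow> space (G x) = {0..}"
  using G_sets[of x] sets_eq_imp_space_eq[of "G x" Rp] by simp

lemma kpow_meas: "kpow G n \<in> Rp \<rightarrow>\<^sub>M prob_algebra Rp"
proof (induction n)
  case 0
  then show ?case by (simp add: measurable_return_prob_space)
next
  case (Suc n)
  have "(\<lambda>x. kpow G n x \<bind> G) \<in> Rp \<rightarrow>\<^sub>M prob_algebra Rp"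
    by (rule measurable_bind_prob_space[OF Suc Gk])
  then show ?case by simp
qed

lemma kpow_sub: "kpow G n \<in> Rp \<rightarrow>\<^sub>M subprob_algebra Rp"
  using kpow_meas by (rule measurable_prob_algebraD)

lemma kpow_space: "0 \<le> x \<Longrightarrow> kpow G n x \<in> space (prob_algebra Rp)"
  using measurable_space[OF kpow_meas, of x] by simp

lemma kpow_prob: "0 \<le> x \<Longrightarrow> prob_space (kpow G n x)"
  using kpow_space by (simp add: space_prob_algebra)

lemma kpow_sets: "0 \<le> x \<Longrightarrow> sets (kpow G n x) = sets Rp"
  using kpow_space by (simp add: space_prob_algebra)

lemma kpow_spc: "0 \<le> x \<Longrightarrow> space (kpow G n x) = {0..}"
  using kpow_sets[of x n] sets_eq_imp_space_eq[of "kpow G n x" Rp] by simp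

lemma kpow_first: "0 \<le> x \<Longrightarrow> kpow G (Suc n) x = G x \<bind> kpow G n"
proof (induction n)
  case 0
  have "kpow G (Suc 0) x = G x" using 0 by (simp add: bind_return[OF Gsub])
  also have "\<dots> = G x \<bind> return Rp" using bind_return''[OF G_sets[OF 0]] by simp
  finally show ?case by (simp add: fun_eq_iff)
next
  case (Suc n)
  have "kpow G (Suc (Suc n)) x = (G x \<bind> kpow G n) \<bind> G" using Suc by simp
  also have "\<dots> = G x \<bind> (\<lambda>y. kpow G n y \<bind> G)"
  proof (rule bind_assoc[OF _ Gsub])
    show "kpow G n \<in> G x \<rightarrow>\<^sub>M subprob_algebra Rp"
      using kpow_sub measurable_cong_sets[OF G_sets[OF Suc(2)] refl, of "subprob_algebra Rp"] by simp
  qed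
  finally show ?case by simp
qed

end

lemma in_Rp: "A \<subseteq> {0..} \<Longrightarrow> A \<in> sets borel \<Longrightarrow> A \<in> sets Rp"
  unfolding Rp_def by (subst sets_restrict_space_iff) auto

lemma layer_cake:
  fixes h :: "'a \<Rightarrow> real"
  assumes M: "sigma_finite_measure M" and h[measurable]: "h \<in> borel_measurable M"
    and nn: "\<And>y. y \<in> space M \<Longrightarrow> 0 \<le> h y"
  shows "(\<integral>\<^sup>+ y. ennreal (h y) \<partial>M)
       = (\<integral>\<^sup>+ s. (\<integral>\<^sup>+ y. (if 0 \<le> s \<and> s < h y then 1 else 0) \<partial>M) \<partial>lborel)"
proof -
  interpret pair_sigma_finite M lborel
    using M by (simp add: pair_sigma_finite_def lborel.sigma_finite_measure_axioms)
  have "(\<integral>\<^sup>+ s. (\<integral>\<^sup>+ y. (if 0 \<le> s \<and> s < h y then 1 else 0::ennreal) \<partial>M) \<partial>lborel)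
     = (\<integral>\<^sup>+ y. (\<integral>\<^sup>+ s. (if 0 \<le> s \<and> s < h y then 1 else 0::ennreal) \<partial>lborel) \<partial>M)"
    by (rule Fubini') measurable
  also have "\<dots> = (\<integral>\<^sup>+ y. ennreal (h y) \<partial>M)"
  proof (rule nn_integral_cong)
    fix y assume y: "y \<in> space M"
    have "(\<integral>\<^sup>+ s. (if 0 \<le> s \<and> s < h y then 1 else 0::ennreal) \<partial>lborel)
        = (\<integral>\<^sup>+ s. indicator {0..<h y} s \<partial>lborel)"
      by (intro nn_integral_cong) (auto simp: indicator_def)
    also have "\<dots> = ennreal (h y)" using nn[OF y] by simp
    finally show "(\<integral>\<^sup>+ s. (if 0 \<le> s \<and> s < h y then 1 else 0::ennreal) \<partial>lborel) = ennreal (h y)" .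
  qed
  finally show ?thesis by simp
qed

locale mkern = kern +
  assumes Gmono: "\<And>a x x'. 0 \<le> a \<Longrightarrow> 0 \<le> x \<Longrightarrow> x \<le> x' \<Longrightarrow>
                   measure (G x') {0..a} \<le> measure (G x) {0..a}"
begin

lemma Gc_le: "0 \<le> x \<Longrightarrow> x \<le> x' \<Longrightarrow> measure (G x') {0..c} \<le> measure (G x) {0..c}"
  using Gmono[of c x x'] by (cases "0 \<le> c") auto

lemma Glt_le:
  assumes x: "0 \<le> x" "x \<le> x'"
  shows "measure (G x') {0..<a} \<le> measure (G x) {0..<a}"
proof (cases "0 < a")
  case False then show ?thesis by simp
next
  case True
  define A where "A n = {0..a - 1 / Suc n}" for n :: nat
  have inc: "incseq A" unfolding A_def
    by (intro monoI) (auto simp: frac_le)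
  have U: "(\<Union>n. A n) = {0..<a}"
  proof (intro equalityI subsetI)
    fix y assume "y \<in> (\<Union>n. A n)"
    then obtain n where "y \<in> A n" by auto
    moreover have "0 < 1 / real (Suc n)" by simp
    moreover have "0 \<le> y \<and> y \<le> a - 1 / real (Suc n)" using \<open>y \<in> A n\<close>
      unfolding A_def by (simp only: atLeastAtMost_iff)
    ultimately have "0 \<le> y" "y < a" by linarith+
    then show "y \<in> {0..<a}" by simp
  next
    fix y assume y: "y \<in> {0..<a}"
    then obtain n where n: "1 / real (Suc n) < a - y"
      using reals_Archimedean[of "a - y"] by (auto simp: inverse_eq_divide)
    then have "y \<in> A n" using y by (auto simp: A_def)
    then show "y \<in> (\<Union>n. A n)" by auto
  qed
  have lim: "(\<lambda>n. measure (G z) (A n)) \<longlonglongrightarrow> measure (G z) {0..<a}" if z: "0 \<le> z" for z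
  proof -
    interpret prob_space "G z" using G_prob[OF z] .
    have "range A \<subseteq> sets (G z)" unfolding G_sets[OF z] A_def
      by (auto intro!: in_Rp)
    from finite_Lim_measure_incseq[OF this inc] show ?thesis by (simp add: U)
  qed
  show ?thesis
    by (rule LIMSEQ_le[OF lim lim]) (use x in \<open>auto simp: A_def intro!: Gc_le\<close>)
qed

lemma downset_le:
  assumes x: "0 \<le> x" "x \<le> x'" and D: "D \<in> sets Rp" "D \<subseteq> {0..}"
    and dc: "\<And>y z. y \<in> D \<Longrightarrow> 0 \<le> z \<Longrightarrow> z \<le> y \<Longrightarrow> z \<in> D"
  shows "measure (G x') D \<le> measure (G x) D"
proof (cases "D = {}")
  case True then show ?thesis by simp
next
  case ne: False
  show ?thesis
  proof (cases "bdd_above D")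
    case False
    have "D = {0..}"
    proof (intro equalityI subsetI)
      fix z :: real assume "z \<in> {0..}"
      have "\<exists>y\<in>D. z < y" using False by (auto simp: bdd_above_def not_le)
      then obtain y where "y \<in> D" "z \<le> y" by force
      then show "z \<in> D" using dc \<open>z \<in> {0..}\<close> by auto
    qed (use D in auto)
    then have "D = space (G x)" "D = space (G x')" using G_spc x by auto
    moreover have "0 \<le> x'" using x by simp
    ultimately have "measure (G x') D = 1" "measure (G x) D = 1"
      using prob_space.prob_space[OF G_prob[of x]] prob_space.prob_space[OF G_prob[of x']] x
      by auto
    then show ?thesis by simp
  next
    case bdd: True
    define a where "a = Sup D"
    have le: "y \<le> a" if "y \<in> D" for y using cSup_upper[OF that bdd] a_def by simp
    show ?thesis
    proof (cases "a \<in> D")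
      case True
      have "D = {0..a}" using le dc[OF True] D(2) by auto
      then show ?thesis using Gc_le x by simp
    next
      case False
      have "D = {0..<a}"
      proof (intro equalityI subsetI)
        fix z assume "z \<in> D" then show "z \<in> {0..<a}" using le False D(2)
          by (metis atLeastLessThan_iff atLeast_iff order_le_less subsetD)
      next
        fix z assume z: "z \<in> {0..<a}"
        then obtain y where "y \<in> D" "z < y" using less_cSup_iff[OF ne bdd] a_def by auto
        then show "z \<in> D" using dc z by auto
      qed
      then show ?thesis using Glt_le x by simp
    qed
  qed
qed

lemma dom_nn:
  assumes x: "0 \<le> x" "x \<le> x'" and h[measurable]: "h \<in> borel_measurable Rp"
    and nn: "\<And>y. 0 \<le> y \<Longrightarrow> 0 \<le> h y"
    and mono: "\<And>y z. 0 \<le> y \<Longrightarrow> y \<le> z \<Longrightarrow> h y \<le> h z"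
  shows "(\<integral>\<^sup>+ y. ennreal (h y) \<partial>G x) \<le> (\<integral>\<^sup>+ y. ennreal (h y) \<partial>G x')"
proof -
  have x': "0 \<le> x'" using x by simp
  have hm: "\<And>z. 0 \<le> z \<Longrightarrow> h \<in> borel_measurable (G z)"
    using measurable_cong_sets[OF G_sets refl] h by blast
  have E: "(\<integral>\<^sup>+ y. (if 0 \<le> s \<and> s < h y then 1 else 0::ennreal) \<partial>G z)
         = emeasure (G z) {y \<in> {0..}. 0 \<le> s \<and> s < h y}" if z: "0 \<le> z" for z s
  proof -
    have S: "{y \<in> {0..}. 0 \<le> s \<and> s < h y} \<in> sets (G z)"
    proof -
      have "{y \<in> space Rp. 0 \<le> s \<and> s < h y} \<in> sets Rp" by measurable
      then show ?thesis using G_sets[OF z] by simp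
    qed
    have "(\<integral>\<^sup>+ y. (if 0 \<le> s \<and> s < h y then 1 else 0::ennreal) \<partial>G z)
        = (\<integral>\<^sup>+ y. indicator {y \<in> {0..}. 0 \<le> s \<and> s < h y} y \<partial>G z)"
      by (intro nn_integral_cong) (auto simp: G_spc[OF z] indicator_def)
    also have "\<dots> = emeasure (G z) {y \<in> {0..}. 0 \<le> s \<and> s < h y}"
      using S by simp
    finally show ?thesis .
  qed
  have P: "emeasure (G x) {y \<in> {0..}. 0 \<le> s \<and> s < h y} \<le> emeasure (G x') {y \<in> {0..}. 0 \<le> s \<and> s < h y}"
    for s
  proof (cases "0 \<le> s")
    case False then show ?thesis by simp
  next
    case s: True
    define L where "L = {y \<in> {0..}. h y \<le> s}"
    have Lm: "L \<in> sets Rp"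
    proof -
      have "{y \<in> space Rp. h y \<le> s} \<in> sets Rp" by measurable
      then show ?thesis by (simp add: L_def)
    qed
    have Ll: "measure (G x') L \<le> measure (G x) L"
      by (rule downset_le[OF x Lm]) (auto simp: L_def intro: order_trans[OF mono])
    have C: "{y \<in> {0..}. 0 \<le> s \<and> s < h y} = space (G z) - L" if "0 \<le> z" for z
      using s that by (auto simp: L_def G_spc)
    have M: "emeasure (G z) {y \<in> {0..}. 0 \<le> s \<and> s < h y} = ennreal (1 - measure (G z) L)" if z: "0 \<le> z" for z
    proof -
      interpret prob_space "G z" using G_prob[OF z] .
      have "L \<in> events" using Lm G_sets[OF z] by simp
      then show ?thesis using C[OF z] prob_compl emeasure_eq_measure by simp
    qed
    show ?thesis using M[OF x(1)] M[OF x'] Ll by (simp add: ennreal_leI)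
  qed
  have "(\<integral>\<^sup>+ y. ennreal (h y) \<partial>G x)
      = (\<integral>\<^sup>+ s. (\<integral>\<^sup>+ y. (if 0 \<le> s \<and> s < h y then 1 else 0) \<partial>G x) \<partial>lborel)"
    by (rule layer_cake[OF _ hm[OF x(1)]])
       (auto simp: G_spc[OF x(1)] nn intro: prob_space_imp_sigma_finite G_prob x)
  also have "\<dots> \<le> (\<integral>\<^sup>+ s. (\<integral>\<^sup>+ y. (if 0 \<le> s \<and> s < h y then 1 else 0) \<partial>G x') \<partial>lborel)"
    by (intro nn_integral_mono, subst E[OF x(1)], subst E[OF x'], rule P)
  also have "\<dots> = (\<integral>\<^sup>+ y. ennreal (h y) \<partial>G x')"
    by (rule layer_cake[OF _ hm[OF x'], symmetric])
       (auto simp: G_spc[OF x'] nn intro: prob_space_imp_sigma_finite G_prob x')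
  finally show ?thesis .
qed

end

lemma cont2_slice: "cont2 f \<Longrightarrow> 0 \<le> p \<Longrightarrow> continuous_on {0..} (\<lambda>x. f x p)"
  unfolding cont2_def Q_def
  by (rule continuous_on_compose2[where f="\<lambda>x. (x, p)" and g="\<lambda>(x, y). f x y", simplified])
     (auto intro!: continuous_intros)

lemma cont2_meas: "cont2 f \<Longrightarrow> 0 \<le> p \<Longrightarrow> (\<lambda>x. f x p) \<in> borel_measurable Rp"
  unfolding Rp_def by (rule borel_measurable_continuous_on_restrict[OF cont2_slice])

lemma sincr_incr: "strict_incr2 f \<Longrightarrow> 0 \<le> x \<Longrightarrow> 0 \<le> y \<Longrightarrow> x \<le> x' \<Longrightarrow> y \<le> y' \<Longrightarrow> f x y \<le> f x' y'"
  unfolding strict_incr2_def by (cases "(x, y) = (x', y')") (auto intro: less_imp_le)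

locale model = mkern +
  fixes prof :: "real \<Rightarrow> real \<Rightarrow> real" and b \<delta> \<beta> :: real
  assumes pc: "cont2 prof" and pinc: "strict_incr2 prof"
    and pneg: "\<And>x p. 0 \<le> x \<Longrightarrow> 0 \<le> p \<Longrightarrow> x = 0 \<or> p = 0 \<Longrightarrow> prof x p < 0"
    and bb: "\<And>x p. 0 \<le> x \<Longrightarrow> 0 \<le> p \<Longrightarrow> prof x p + b \<ge> 1"
    and kint: "\<And>x p t. 0 \<le> x \<Longrightarrow> 0 \<le> p \<Longrightarrow> integrable (kpow G t x) (\<lambda>y. prof y p)"
    and kfin: "\<And>x p. 0 \<le> x \<Longrightarrow> 0 \<le> p \<Longrightarrow>
                      summable (\<lambda>t. \<delta> ^ t * (\<integral>y. prof y p + b \<partial>kpow G t x))"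
    and \<beta>0: "0 < \<beta>" and \<beta>\<delta>: "\<beta> < \<delta>" and \<delta>1: "\<delta> < 1"
begin

abbreviation "k \<equiv> kappa G prof b \<delta>"

definition H where "H t x p = (\<integral>y. prof y p + b \<partial>kpow G t x)"

lemma \<delta>0: "0 < \<delta>" using \<beta>0 \<beta>\<delta> by simp

lemma prof_meas[measurable]: "0 \<le> p \<Longrightarrow> (\<lambda>x. prof x p) \<in> borel_measurable Rp"
  by (rule cont2_meas[OF pc])

lemma meas_G: "f \<in> borel_measurable Rp \<Longrightarrow> 0 \<le> x \<Longrightarrow> f \<in> borel_measurable (G x)"
  using measurable_cong_sets[OF G_sets refl] by blast

lemma meas_kpow: "f \<in> borel_measurable Rp \<Longrightarrow> 0 \<le> x \<Longrightarrow> f \<in> borel_measurable (kpow G t x)"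
  using measurable_cong_sets[OF kpow_sets refl] by blast

lemma H_int: "0 \<le> x \<Longrightarrow> 0 \<le> p \<Longrightarrow> integrable (kpow G t x) (\<lambda>y. prof y p + b)"
proof -
  assume x: "0 \<le> x" and p: "0 \<le> p"
  interpret prob_space "kpow G t x" using kpow_prob[OF x] .
  show ?thesis using kint[OF x p] by simp
qed

lemma H_ge1: "0 \<le> x \<Longrightarrow> 0 \<le> p \<Longrightarrow> 1 \<le> H t x p"
proof -
  assume x: "0 \<le> x" and p: "0 \<le> p"
  interpret prob_space "kpow G t x" using kpow_prob[OF x] .
  have "(\<integral>y. 1 \<partial>kpow G t x) \<le> H t x p" unfolding H_def
    by (rule integral_mono[OF _ H_int[OF x p]]) (auto simp: kpow_spc[OF x] bb p)
  then show ?thesis by (simp add: prob_space)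
qed

lemma H_nn: "0 \<le> x \<Longrightarrow> 0 \<le> p \<Longrightarrow> ennreal (H t x p) = (\<integral>\<^sup>+y. ennreal (prof y p + b) \<partial>kpow G t x)"
  unfolding H_def
  by (rule nn_integral_eq_integral[symmetric, OF H_int])
     (auto intro!: AE_I2 simp: kpow_spc bb intro: order_trans[OF zero_le_one])

lemma H0: "0 \<le> x \<Longrightarrow> 0 \<le> p \<Longrightarrow> H 0 x p = prof x p + b"
  unfolding H_def by (simp add: integral_return)

lemma H_meas[measurable]: "0 \<le> p \<Longrightarrow> (\<lambda>x. H t x p) \<in> borel_measurable Rp"
  unfolding H_def
  by (rule measurable_compose[OF kpow_sub integral_measurable_subprob_algebra]) simp

lemma H_Suc: "0 \<le> x \<Longrightarrow> 0 \<le> p \<Longrightarrow> ennreal (H (Suc t) x p) = (\<integral>\<^sup>+y. ennreal (H t y p) \<partial>G x)"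
proof -
  assume x: "0 \<le> x" and p: "0 \<le> p"
  have ks: "kpow G t \<in> G x \<rightarrow>\<^sub>M subprob_algebra Rp"
    using kpow_sub measurable_cong_sets[OF G_sets[OF x] refl, of "subprob_algebra Rp"] by simp
  have "ennreal (H (Suc t) x p) = (\<integral>\<^sup>+y. ennreal (prof y p + b) \<partial>(G x \<bind> kpow G t))"
    using H_nn[OF x p, of "Suc t"] kpow_first[OF x] by simp
  also have "\<dots> = (\<integral>\<^sup>+y. (\<integral>\<^sup>+z. ennreal (prof z p + b) \<partial>kpow G t y) \<partial>G x)"
    by (rule nn_integral_bind[OF _ ks]) (use p in measurable)
  also have "\<dots> = (\<integral>\<^sup>+y. ennreal (H t y p) \<partial>G x)"
    by (intro nn_integral_cong) (simp add: G_spc[OF x] H_nn p)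
  finally show ?thesis .
qed

lemma k_def': "k x p = (\<Sum>t. \<delta> ^ t * H t x p)"
  unfolding kappa_def H_def ..

lemma k_sums: "0 \<le> x \<Longrightarrow> 0 \<le> p \<Longrightarrow> (\<lambda>t. \<delta> ^ t * H t x p) sums k x p"
  unfolding k_def' H_def using kfin by (simp add: summable_sums)

lemma k_ge: "0 \<le> x \<Longrightarrow> 0 \<le> p \<Longrightarrow> prof x p + b \<le> k x p"
proof -
  assume x: "0 \<le> x" and p: "0 \<le> p"
  have "(\<Sum>t\<in>{0}. \<delta> ^ t * H t x p) \<le> (\<Sum>t. \<delta> ^ t * H t x p)"
  proof (rule sum_le_suminf)
    show "summable (\<lambda>t. \<delta> ^ t * H t x p)" using k_sums[OF x p] by (simp add: sums_iff)
    fix n show "0 \<le> \<delta> ^ n * H n x p" using \<delta>0 H_ge1[OF x p, of n] by simp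
  qed simp
  then show ?thesis by (simp add: k_def' H0 x p)
qed

lemma k_ge1: "0 \<le> x \<Longrightarrow> 0 \<le> p \<Longrightarrow> 1 \<le> k x p"
  using k_ge bb by (meson order_trans)

lemma k_meas[measurable]: "0 \<le> p \<Longrightarrow> (\<lambda>x. k x p) \<in> borel_measurable Rp"
  unfolding k_def' by measurable

lemma k_step_nn: "0 \<le> x \<Longrightarrow> 0 \<le> p \<Longrightarrow> (\<integral>\<^sup>+y. ennreal (k y p) \<partial>G x) = ennreal ((k x p - H 0 x p) / \<delta>)"
proof -
  assume x: "0 \<le> x" and p: "0 \<le> p"
  note Hm = H_meas[OF p]
  have mH: "(\<lambda>y. ennreal (\<delta> ^ t * H t y p)) \<in> borel_measurable (G x)" for t
    by (rule meas_G[OF _ x]) (use Hm in measurable)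
  have mH': "(\<lambda>y. ennreal (H t y p)) \<in> borel_measurable (G x)" for t
    by (rule meas_G[OF _ x]) (use Hm in measurable)
  have "(\<integral>\<^sup>+y. ennreal (k y p) \<partial>G x) = (\<integral>\<^sup>+y. (\<Sum>t. ennreal (\<delta> ^ t * H t y p)) \<partial>G x)"
  proof (intro nn_integral_cong)
    fix y assume "y \<in> space (G x)"
    then have y: "0 \<le> y" using G_spc[OF x] by simp
    have nn: "0 \<le> \<delta> ^ t * H t y p" for t
      using \<delta>0 H_ge1[OF y p, of t] by simp
    have "(\<Sum>t. ennreal (\<delta> ^ t * H t y p)) = ennreal (\<Sum>t. \<delta> ^ t * H t y p)"
      by (rule suminf_ennreal2[OF nn]) (use k_sums[OF y p] in \<open>simp add: sums_iff\<close>)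
    then show "ennreal (k y p) = (\<Sum>t. ennreal (\<delta> ^ t * H t y p))"
      by (simp only: k_def')
  qed
  also have "\<dots> = (\<Sum>t. (\<integral>\<^sup>+y. ennreal (\<delta> ^ t * H t y p) \<partial>G x))"
    by (rule nn_integral_suminf[OF mH])
  also have "\<dots> = (\<Sum>t. ennreal (\<delta> ^ t * H (Suc t) x p))"
  proof (intro suminf_cong)
    fix t
    have "(\<integral>\<^sup>+y. ennreal (\<delta> ^ t * H t y p) \<partial>G x) = (\<integral>\<^sup>+y. ennreal (\<delta> ^ t) * ennreal (H t y p) \<partial>G x)"
      using \<delta>0 by (simp only: ennreal_mult' zero_le_power less_imp_le)
    also have "\<dots> = ennreal (\<delta> ^ t) * (\<integral>\<^sup>+y. ennreal (H t y p) \<partial>G x)"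
      by (rule nn_integral_cmult[OF mH'])
    also have "\<dots> = ennreal (\<delta> ^ t * H (Suc t) x p)"
      using \<delta>0 by (simp only: H_Suc[OF x p] ennreal_mult' zero_le_power less_imp_le)
    finally show "(\<integral>\<^sup>+y. ennreal (\<delta> ^ t * H t y p) \<partial>G x) = ennreal (\<delta> ^ t * H (Suc t) x p)" .
  qed
  also have "\<dots> = ennreal ((k x p - H 0 x p) / \<delta>)"
  proof -
    have "(\<lambda>t. \<delta> ^ (Suc t) * H (Suc t) x p) sums (k x p - H 0 x p)"
      using k_sums[OF x p] sums_Suc_iff[of "\<lambda>t. \<delta> ^ t * H t x p"] by simp
    from sums_divide[OF this, of \<delta>]
    have s0: "(\<lambda>t. \<delta> ^ (Suc t) * H (Suc t) x p / \<delta>) sums ((k x p - H 0 x p) / \<delta>)" .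
    have e: "(\<lambda>t. \<delta> ^ (Suc t) * H (Suc t) x p / \<delta>) = (\<lambda>t. \<delta> ^ t * H (Suc t) x p)"
      using \<delta>0 by (auto simp: fun_eq_iff)
    have s: "(\<lambda>t. \<delta> ^ t * H (Suc t) x p) sums ((k x p - H 0 x p) / \<delta>)"
      using s0 unfolding e .
    have nn: "0 \<le> \<delta> ^ t * H (Suc t) x p" for t
      using \<delta>0 H_ge1[OF x p, of "Suc t"] by simp
    show ?thesis
      using suminf_ennreal2[OF nn] s by (simp add: sums_iff)
  qed
  finally show ?thesis .
qed

lemma k_step_nn_le: "0 \<le> x \<Longrightarrow> 0 \<le> p \<Longrightarrow> (\<integral>\<^sup>+y. ennreal (k y p) \<partial>G x) \<le> ennreal (k x p / \<delta>)"
proof -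
  assume x: "0 \<le> x" and p: "0 \<le> p"
  have "(k x p - H 0 x p) / \<delta> \<le> k x p / \<delta>"
    using H_ge1[OF x p, of 0] \<delta>0 by (intro divide_right_mono) auto
  then show ?thesis using k_step_nn[OF x p] by (simp add: ennreal_leI)
qed

lemma k_int: "0 \<le> x \<Longrightarrow> 0 \<le> p \<Longrightarrow> integrable (G x) (\<lambda>y. k y p)"
proof -
  assume x: "0 \<le> x" and p: "0 \<le> p"
  show ?thesis
  proof (rule integrableI_nonneg)
    show "(\<lambda>y. k y p) \<in> borel_measurable (G x)" by (rule meas_G[OF k_meas[OF p] x])
    have "\<And>y. y \<in> space (G x) \<Longrightarrow> 0 \<le> k y p"
    proof -
      fix y assume "y \<in> space (G x)"
      then have "0 \<le> y" using G_spc[OF x] by simp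
      then show "0 \<le> k y p" using k_ge1[of y p] p by linarith
    qed
    then show "AE y in G x. 0 \<le> k y p" by (rule AE_I2)
    show "(\<integral>\<^sup>+ y. ennreal (k y p) \<partial>G x) < \<infinity>" using k_step_nn[OF x p] by simp
  qed
qed

lemma k_step: "0 \<le> x \<Longrightarrow> 0 \<le> p \<Longrightarrow> (\<integral>y. k y p \<partial>G x) \<le> k x p / \<delta>"
proof -
  assume x: "0 \<le> x" and p: "0 \<le> p"
  have "ennreal (\<integral>y. k y p \<partial>G x) = (\<integral>\<^sup>+y. ennreal (k y p) \<partial>G x)"
    by (rule nn_integral_eq_integral[symmetric, OF k_int[OF x p]])
       (auto simp: G_spc[OF x] intro!: AE_I2 order_trans[OF zero_le_one k_ge1] p)
  also have "\<dots> \<le> ennreal (k x p / \<delta>)" by (rule k_step_nn_le[OF x p])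
  finally show ?thesis using k_ge1[OF x p] \<delta>0 by (simp add: ennreal_le_iff)
qed

end

context model begin

lemma H_mono_x: "0 \<le> x \<Longrightarrow> x \<le> x' \<Longrightarrow> 0 \<le> p \<Longrightarrow> H t x p \<le> H t x' p"
proof (induction t arbitrary: x x')
  case 0
  then show ?case using sincr_incr[OF pinc, of x p x' p] by (simp add: H0)
next
  case (Suc t)
  have x': "0 \<le> x'" using Suc by simp
  have "ennreal (H (Suc t) x p) \<le> ennreal (H (Suc t) x' p)"
    unfolding H_Suc[OF Suc(2) Suc(4)] H_Suc[OF x' Suc(4)]
  proof (rule dom_nn[OF Suc(2) Suc(3)])
    show "(\<lambda>y. H t y p) \<in> borel_measurable Rp" using H_meas[OF Suc(4)] .
    show "\<And>y. 0 \<le> y \<Longrightarrow> 0 \<le> H t y p" using H_ge1[OF _ Suc(4)] by (meson order_trans zero_le_one)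
    show "\<And>y z. 0 \<le> y \<Longrightarrow> y \<le> z \<Longrightarrow> H t y p \<le> H t z p" using Suc(1) Suc(4) by blast
  qed
  then show ?case using H_ge1[OF x' Suc(4), of "Suc t"] by (simp add: ennreal_le_iff)
qed

lemma H_mono_p: "0 \<le> x \<Longrightarrow> 0 \<le> p \<Longrightarrow> p \<le> p' \<Longrightarrow> H t x p \<le> H t x p'"
  unfolding H_def
  by (rule integral_mono[OF H_int H_int]) (auto simp: kpow_spc intro: sincr_incr[OF pinc])

lemma k_mono: "0 \<le> x \<Longrightarrow> x \<le> x' \<Longrightarrow> 0 \<le> p \<Longrightarrow> p \<le> p' \<Longrightarrow> k x p \<le> k x' p'"
proof -
  assume a: "0 \<le> x" "x \<le> x'" "0 \<le> p" "p \<le> p'"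
  then have a': "0 \<le> x'" "0 \<le> p'" by auto
  show ?thesis unfolding k_def'
  proof (rule suminf_le)
    fix t
    have "H t x p \<le> H t x' p'" using H_mono_x[OF a(1,2,3)] H_mono_p[OF a'(1) a(3,4)] by (meson order_trans)
    then show "\<delta> ^ t * H t x p \<le> \<delta> ^ t * H t x' p'" using \<delta>0 by (simp add: mult_left_mono)
  qed (use k_sums a a' in \<open>auto simp: sums_iff\<close>)
qed

lemma k_pow_nn: "0 \<le> x \<Longrightarrow> 0 \<le> p \<Longrightarrow> (\<integral>\<^sup>+y. ennreal (k y p) \<partial>kpow G n x) \<le> ennreal (k x p / \<delta> ^ n)"
proof (induction n)
  case 0
  then show ?case by (simp add: nn_integral_return k_meas)
next
  case (Suc n)
  have Gs: "G \<in> kpow G n x \<rightarrow>\<^sub>M subprob_algebra Rp"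
    using Gsub measurable_cong_sets[OF kpow_sets[OF Suc(2), of n] refl, of "subprob_algebra Rp"] by simp
  have "(\<integral>\<^sup>+y. ennreal (k y p) \<partial>kpow G (Suc n) x) = (\<integral>\<^sup>+y. (\<integral>\<^sup>+z. ennreal (k z p) \<partial>G y) \<partial>kpow G n x)"
    by (simp only: kpow.simps, rule nn_integral_bind[OF _ Gs]) (use k_meas[OF Suc(3)] in measurable)
  also have "\<dots> \<le> (\<integral>\<^sup>+y. ennreal (1 / \<delta>) * ennreal (k y p) \<partial>kpow G n x)"
  proof (rule nn_integral_mono)
    fix y assume "y \<in> space (kpow G n x)"
    then have y: "0 \<le> y" using kpow_spc[OF Suc(2)] by simp
    have "ennreal (k y p / \<delta>) = ennreal (1 / \<delta>) * ennreal (k y p)"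
      using \<delta>0 k_ge1[OF y Suc(3)] by (simp add: ennreal_mult[symmetric])
    then show "(\<integral>\<^sup>+z. ennreal (k z p) \<partial>G y) \<le> ennreal (1 / \<delta>) * ennreal (k y p)"
      using k_step_nn_le[OF y Suc(3)] by simp
  qed
  also have "\<dots> = ennreal (1 / \<delta>) * (\<integral>\<^sup>+y. ennreal (k y p) \<partial>kpow G n x)"
    by (rule nn_integral_cmult) (rule meas_kpow[OF _ Suc(2)], use k_meas[OF Suc(3)] in measurable)
  also have "\<dots> \<le> ennreal (1 / \<delta>) * ennreal (k x p / \<delta> ^ n)"
    using Suc by (intro mult_left_mono) auto
  also have "\<dots> = ennreal (k x p / \<delta> ^ Suc n)"
    using \<delta>0 k_ge1[OF Suc(2,3)] by (simp add: ennreal_mult[symmetric])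
  finally show ?case .
qed

lemma k_int_pow: "0 \<le> x \<Longrightarrow> 0 \<le> p \<Longrightarrow> integrable (kpow G n x) (\<lambda>y. k y p)"
proof -
  assume x: "0 \<le> x" and p: "0 \<le> p"
  show ?thesis
  proof (rule integrableI_nonneg)
    show "(\<lambda>y. k y p) \<in> borel_measurable (kpow G n x)" by (rule meas_kpow[OF k_meas[OF p] x])
    have "\<And>y. y \<in> space (kpow G n x) \<Longrightarrow> 0 \<le> k y p"
    proof -
      fix y assume "y \<in> space (kpow G n x)"
      then have "0 \<le> y" using kpow_spc[OF x] by simp
      then show "0 \<le> k y p" using k_ge1[of y p] p by linarith
    qed
    then show "AE y in kpow G n x. 0 \<le> k y p" by (rule AE_I2)
    show "(\<integral>\<^sup>+ y. ennreal (k y p) \<partial>kpow G n x) < \<infinity>"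
      using k_pow_nn[OF x p, of n] by (simp add: le_less_trans)
  qed
qed

lemma k_pow: "0 \<le> x \<Longrightarrow> 0 \<le> p \<Longrightarrow> (\<integral>y. k y p \<partial>kpow G n x) \<le> k x p / \<delta> ^ n"
proof -
  assume x: "0 \<le> x" and p: "0 \<le> p"
  have "ennreal (\<integral>y. k y p \<partial>kpow G n x) = (\<integral>\<^sup>+y. ennreal (k y p) \<partial>kpow G n x)"
    by (rule nn_integral_eq_integral[symmetric, OF k_int_pow[OF x p]])
       (auto simp: kpow_spc[OF x] intro!: AE_I2 order_trans[OF zero_le_one k_ge1] p)
  also have "\<dots> \<le> ennreal (k x p / \<delta> ^ n)" by (rule k_pow_nn[OF x p])
  finally show ?thesis using k_ge1[OF x p] \<delta>0 by (simp add: ennreal_le_iff)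
qed

lemma C_nonneg: "(\<And>y. 0 \<le> y \<Longrightarrow> \<bar>f y\<bar> \<le> C * k y p) \<Longrightarrow> 0 \<le> p \<Longrightarrow> 0 \<le> C"
proof -
  assume f: "\<And>y. 0 \<le> y \<Longrightarrow> \<bar>f y\<bar> \<le> C * k y p" and p: "0 \<le> p"
  have "0 \<le> C * k 0 p" using f[of 0] by simp
  moreover have "0 < k 0 p" using k_ge1[of 0 p] p by simp
  ultimately show ?thesis by (simp add: zero_le_mult_iff)
qed

lemma kb_G:
  assumes f: "f \<in> borel_measurable Rp" and fb: "\<And>y. 0 \<le> y \<Longrightarrow> \<bar>f y\<bar> \<le> C * k y p"
    and x: "0 \<le> x" and p: "0 \<le> p"
  shows "integrable (G x) f" "\<bar>\<integral>y. f y \<partial>G x\<bar> \<le> C * k x p / \<delta>"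
proof -
  have C: "0 \<le> C" by (rule C_nonneg[OF fb p])
  have ik: "integrable (G x) (\<lambda>y. C * k y p)" using k_int[OF x p] by simp
  show i: "integrable (G x) f"
  proof (rule Bochner_Integration.integrable_bound[OF ik meas_G[OF f x]])
    show "AE y in G x. norm (f y) \<le> norm (C * k y p)"
      by (rule AE_I2) (use fb G_spc[OF x] in \<open>auto intro: order_trans[OF _ abs_ge_self]\<close>)
  qed
  have "\<bar>\<integral>y. f y \<partial>G x\<bar> \<le> (\<integral>y. C * k y p \<partial>G x)"
    by (rule integral_abs_bound_integral[OF i ik]) (use fb G_spc[OF x] in auto)
  also have "\<dots> = C * (\<integral>y. k y p \<partial>G x)" by simp
  also have "\<dots> \<le> C * (k x p / \<delta>)" using k_step[OF x p] C by (rule mult_left_mono)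
  finally show "\<bar>\<integral>y. f y \<partial>G x\<bar> \<le> C * k x p / \<delta>" by simp
qed

lemma kb_pow:
  assumes f: "f \<in> borel_measurable Rp" and fb: "\<And>y. 0 \<le> y \<Longrightarrow> \<bar>f y\<bar> \<le> C * k y p"
    and x: "0 \<le> x" and p: "0 \<le> p"
  shows "integrable (kpow G n x) f" "\<bar>\<integral>y. f y \<partial>kpow G n x\<bar> \<le> C * k x p / \<delta> ^ n"
proof -
  have C: "0 \<le> C" by (rule C_nonneg[OF fb p])
  have ik: "integrable (kpow G n x) (\<lambda>y. C * k y p)" using k_int_pow[OF x p] by simp
  show i: "integrable (kpow G n x) f"
  proof (rule Bochner_Integration.integrable_bound[OF ik meas_kpow[OF f x]])
    show "AE y in kpow G n x. norm (f y) \<le> norm (C * k y p)"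
      by (rule AE_I2) (use fb kpow_spc[OF x] in \<open>auto intro: order_trans[OF _ abs_ge_self]\<close>)
  qed
  have "\<bar>\<integral>y. f y \<partial>kpow G n x\<bar> \<le> (\<integral>y. C * k y p \<partial>kpow G n x)"
    by (rule integral_abs_bound_integral[OF i ik]) (use fb kpow_spc[OF x] in auto)
  also have "\<dots> = C * (\<integral>y. k y p \<partial>kpow G n x)" by simp
  also have "\<dots> \<le> C * (k x p / \<delta> ^ n)" using k_pow[OF x p] C by (rule mult_left_mono)
  finally show "\<bar>\<integral>y. f y \<partial>kpow G n x\<bar> \<le> C * k x p / \<delta> ^ n" by simp
qed

lemma dom_real:
  assumes x: "0 \<le> x" "x \<le> x'" and p: "0 \<le> p" and h: "h \<in> borel_measurable Rp"
    and hb: "\<And>y. 0 \<le> y \<Longrightarrow> \<bar>h y\<bar> \<le> C * k y p"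
    and mono: "\<And>y z. 0 \<le> y \<Longrightarrow> y \<le> z \<Longrightarrow> h y \<le> h z"
  shows "(\<integral>y. h y \<partial>G x) \<le> (\<integral>y. h y \<partial>G x')"
proof -
  have x': "0 \<le> x'" using x by simp
  define g where "g y = h y - h 0" for y
  have gm: "g \<in> borel_measurable Rp" unfolding g_def using h by measurable
  have gi: "integrable (G z) g" if z: "0 \<le> z" for z
  proof -
    interpret prob_space "G z" using G_prob[OF z] .
    show ?thesis unfolding g_def using kb_G(1)[OF h hb z p] by simp
  qed
  have gI: "(\<integral>y. g y \<partial>G z) = (\<integral>y. h y \<partial>G z) - h 0" if z: "0 \<le> z" for z
  proof -
    interpret prob_space "G z" using G_prob[OF z] .
    show ?thesis unfolding g_def using kb_G(1)[OF h hb z p] by (simp add: prob_space)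
  qed
  have gnn: "ennreal (\<integral>y. g y \<partial>G z) = (\<integral>\<^sup>+y. ennreal (g y) \<partial>G z)" if z: "0 \<le> z" for z
    by (rule nn_integral_eq_integral[symmetric, OF gi[OF z]])
       (auto simp: G_spc[OF z] g_def intro!: AE_I2 mono)
  have "(\<integral>\<^sup>+y. ennreal (g y) \<partial>G x) \<le> (\<integral>\<^sup>+y. ennreal (g y) \<partial>G x')"
    by (rule dom_nn[OF x gm]) (auto simp: g_def intro: mono)
  then have "ennreal (\<integral>y. g y \<partial>G x) \<le> ennreal (\<integral>y. g y \<partial>G x')"
    using gnn[OF x(1)] gnn[OF x'] by simp
  moreover have "0 \<le> (\<integral>y. g y \<partial>G x')"
    by (rule integral_nonneg_AE) (auto simp: G_spc[OF x'] g_def intro!: AE_I2 mono)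
  ultimately have "(\<integral>y. g y \<partial>G x) \<le> (\<integral>y. g y \<partial>G x')" by (simp add: ennreal_le_iff)
  then show ?thesis using gI[OF x(1)] gI[OF x'] by simp
qed

end

context model begin

lemma intG_meas: fixes g :: "real \<Rightarrow> real" assumes g: "g \<in> borel_measurable Rp" shows "(\<lambda>y. \<integral>z. g z \<partial>G y) \<in> borel_measurable Rp"
  by (rule measurable_compose[OF Gsub integral_measurable_subprob_algebra[OF g]])

lemma bind_int_nn:
  assumes x: "0 \<le> x" and p: "0 \<le> p" and g: "g \<in> borel_measurable Rp"
    and gb: "\<And>y. 0 \<le> y \<Longrightarrow> 0 \<le> g y \<and> g y \<le> C * k y p"
  shows "(\<integral>y. g y \<partial>kpow G (Suc n) x) = (\<integral>y. (\<integral>z. g z \<partial>G y) \<partial>kpow G n x)"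
proof -
  have gb': "\<And>y. 0 \<le> y \<Longrightarrow> \<bar>g y\<bar> \<le> C * k y p" using gb by auto
  have Gs: "G \<in> kpow G n x \<rightarrow>\<^sub>M subprob_algebra Rp"
    using Gsub measurable_cong_sets[OF kpow_sets[OF x, of n] refl, of "subprob_algebra Rp"] by simp
  have i1: "integrable (kpow G (Suc n) x) g" by (rule kb_pow(1)[OF g gb' x p])
  have bI: "\<And>y. 0 \<le> y \<Longrightarrow> \<bar>\<integral>z. g z \<partial>G y\<bar> \<le> (C / \<delta>) * k y p"
    using kb_G(2)[OF g gb' _ p] by simp
  have i2: "integrable (kpow G n x) (\<lambda>y. \<integral>z. g z \<partial>G y)"
    by (rule kb_pow(1)[OF intG_meas[OF g] bI x p])
  have nn2: "0 \<le> (\<integral>z. g z \<partial>G y)" if "0 \<le> y" for y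
    by (rule integral_nonneg_AE) (use gb G_spc[OF that] in \<open>auto intro!: AE_I2\<close>)
  have "ennreal (\<integral>y. g y \<partial>kpow G (Suc n) x) = (\<integral>\<^sup>+y. ennreal (g y) \<partial>kpow G (Suc n) x)"
    by (rule nn_integral_eq_integral[symmetric, OF i1]) (use gb kpow_spc[OF x] in \<open>auto intro!: AE_I2\<close>)
  also have "\<dots> = (\<integral>\<^sup>+y. (\<integral>\<^sup>+z. ennreal (g z) \<partial>G y) \<partial>kpow G n x)"
    by (simp only: kpow.simps, rule nn_integral_bind[OF _ Gs]) (use g in measurable)
  also have "\<dots> = (\<integral>\<^sup>+y. ennreal (\<integral>z. g z \<partial>G y) \<partial>kpow G n x)"
  proof (rule nn_integral_cong)
    fix y assume "y \<in> space (kpow G n x)"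
    then have y: "0 \<le> y" using kpow_spc[OF x] by simp
    show "(\<integral>\<^sup>+z. ennreal (g z) \<partial>G y) = ennreal (\<integral>z. g z \<partial>G y)"
      by (rule nn_integral_eq_integral[OF kb_G(1)[OF g gb' y p]]) (use gb G_spc[OF y] in \<open>auto intro!: AE_I2\<close>)
  qed
  also have "\<dots> = ennreal (\<integral>y. (\<integral>z. g z \<partial>G y) \<partial>kpow G n x)"
    by (rule nn_integral_eq_integral[OF i2]) (use nn2 kpow_spc[OF x] in \<open>auto intro!: AE_I2\<close>)
  finally have e: "ennreal (\<integral>y. g y \<partial>kpow G (Suc n) x) = ennreal (\<integral>y. (\<integral>z. g z \<partial>G y) \<partial>kpow G n x)" .
  have "0 \<le> (\<integral>y. g y \<partial>kpow G (Suc n) x)"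
    by (rule integral_nonneg_AE) (use gb kpow_spc[OF x] in \<open>auto intro!: AE_I2\<close>)
  moreover have "0 \<le> (\<integral>y. (\<integral>z. g z \<partial>G y) \<partial>kpow G n x)"
    by (rule integral_nonneg_AE) (use nn2 kpow_spc[OF x] in \<open>auto intro!: AE_I2\<close>)
  ultimately show ?thesis using e by simp
qed

lemma bind_int:
  assumes x: "0 \<le> x" and p: "0 \<le> p" and f: "f \<in> borel_measurable Rp"
    and fb: "\<And>y. 0 \<le> y \<Longrightarrow> \<bar>f y\<bar> \<le> C * k y p"
  shows "(\<integral>y. f y \<partial>kpow G (Suc n) x) = (\<integral>y. (\<integral>z. f z \<partial>G y) \<partial>kpow G n x)"
proof -
  have C: "0 \<le> C" by (rule C_nonneg[OF fb p])
  define g1 where "g1 y = f y + C * k y p" for y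
  define g2 where "g2 y = C * k y p" for y
  have g1m: "g1 \<in> borel_measurable Rp" unfolding g1_def using f k_meas[OF p] by measurable
  have g2m: "g2 \<in> borel_measurable Rp" unfolding g2_def using k_meas[OF p] by measurable
  have g1b: "0 \<le> g1 y \<and> g1 y \<le> (2 * C) * k y p" if y: "0 \<le> y" for y
  proof -
    have "\<bar>f y\<bar> \<le> C * k y p" by (rule fb[OF y])
    then show ?thesis unfolding g1_def by (auto simp: abs_le_iff)
  qed
  have g2b: "\<And>y. 0 \<le> y \<Longrightarrow> 0 \<le> g2 y \<and> g2 y \<le> C * k y p"
  proof -
    fix y :: real assume y: "0 \<le> y"
    have "0 \<le> k y p" using k_ge1[OF y p] by simp
    then show "0 \<le> g2 y \<and> g2 y \<le> C * k y p" unfolding g2_def using C by simp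
  qed
  have g1b': "\<And>y. 0 \<le> y \<Longrightarrow> \<bar>g1 y\<bar> \<le> (2 * C) * k y p" using g1b by auto
  have g2b': "\<And>y. 0 \<le> y \<Longrightarrow> \<bar>g2 y\<bar> \<le> C * k y p" using g2b by auto
  have fe: "f = (\<lambda>y. g1 y - g2 y)" by (auto simp: g1_def g2_def fun_eq_iff)
  have "(\<integral>y. f y \<partial>kpow G (Suc n) x) = (\<integral>y. g1 y \<partial>kpow G (Suc n) x) - (\<integral>y. g2 y \<partial>kpow G (Suc n) x)"
    unfolding fe by (rule Bochner_Integration.integral_diff[OF kb_pow(1)[OF g1m g1b' x p] kb_pow(1)[OF g2m g2b' x p]])
  also have "\<dots> = (\<integral>y. (\<integral>z. g1 z \<partial>G y) \<partial>kpow G n x) - (\<integral>y. (\<integral>z. g2 z \<partial>G y) \<partial>kpow G n x)"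
    using bind_int_nn[OF x p g1m g1b] bind_int_nn[OF x p g2m g2b] by simp
  also have "\<dots> = (\<integral>y. (\<integral>z. g1 z \<partial>G y) - (\<integral>z. g2 z \<partial>G y) \<partial>kpow G n x)"
  proof (rule Bochner_Integration.integral_diff[symmetric])
    have "\<And>y. 0 \<le> y \<Longrightarrow> \<bar>\<integral>z. g1 z \<partial>G y\<bar> \<le> (2 * C / \<delta>) * k y p"
      using kb_G(2)[OF g1m g1b' _ p] by simp
    then show "integrable (kpow G n x) (\<lambda>y. \<integral>z. g1 z \<partial>G y)"
      by (rule kb_pow(1)[OF intG_meas[OF g1m] _ x p])
    have "\<And>y. 0 \<le> y \<Longrightarrow> \<bar>\<integral>z. g2 z \<partial>G y\<bar> \<le> (C / \<delta>) * k y p"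
      using kb_G(2)[OF g2m g2b' _ p] by simp
    then show "integrable (kpow G n x) (\<lambda>y. \<integral>z. g2 z \<partial>G y)"
      by (rule kb_pow(1)[OF intG_meas[OF g2m] _ x p])
  qed
  also have "\<dots> = (\<integral>y. (\<integral>z. f z \<partial>G y) \<partial>kpow G n x)"
  proof (rule Bochner_Integration.integral_cong[OF refl])
    fix y assume "y \<in> space (kpow G n x)"
    then have y: "0 \<le> y" using kpow_spc[OF x] by simp
    show "(\<integral>z. g1 z \<partial>G y) - (\<integral>z. g2 z \<partial>G y) = (\<integral>z. f z \<partial>G y)"
      unfolding fe by (rule Bochner_Integration.integral_diff[symmetric, OF kb_G(1)[OF g1m g1b' y p] kb_G(1)[OF g2m g2b' y p]])
  qed
  finally show ?thesis .
qed

lemma vanish: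
  assumes p: "0 \<le> p" and d: "d \<in> borel_measurable Rp"
    and db: "\<And>y. 0 \<le> y \<Longrightarrow> 0 \<le> d y \<and> d y \<le> C * k y p"
    and rec: "\<And>x. 0 \<le> x \<Longrightarrow> d x \<le> \<beta> * (\<integral>y. d y \<partial>G x)"
    and x: "0 \<le> x"
  shows "d x = 0"
proof -
  have db': "\<And>y. 0 \<le> y \<Longrightarrow> \<bar>d y\<bar> \<le> C * k y p" using db by auto
  have C: "0 \<le> C" by (rule C_nonneg[OF db' p])
  have ind: "\<And>x. 0 \<le> x \<Longrightarrow> d x \<le> C * (\<beta> / \<delta>) ^ n * k x p" for n
  proof (induction n)
    case 0 then show ?case using db by simp
  next
    case (Suc n)
    have "d x \<le> \<beta> * (\<integral>y. d y \<partial>G x)" by (rule rec[OF Suc(2)])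
    also have "\<dots> \<le> \<beta> * (\<integral>y. C * (\<beta> / \<delta>) ^ n * k y p \<partial>G x)"
    proof (intro mult_left_mono integral_mono)
      show "integrable (G x) d" by (rule kb_G(1)[OF d db' Suc(2) p])
      show "integrable (G x) (\<lambda>y. C * (\<beta> / \<delta>) ^ n * k y p)" using k_int[OF Suc(2) p] by simp
      fix y assume "y \<in> space (G x)"
      then show "d y \<le> C * (\<beta> / \<delta>) ^ n * k y p" using Suc(1) G_spc[OF Suc(2)] by simp
    qed (use \<beta>0 in simp)
    also have "\<dots> = \<beta> * (C * (\<beta> / \<delta>) ^ n) * (\<integral>y. k y p \<partial>G x)" by simp
    also have "\<dots> \<le> \<beta> * (C * (\<beta> / \<delta>) ^ n) * (k x p / \<delta>)"
      by (rule mult_left_mono[OF k_step[OF Suc(2) p]]) (use \<beta>0 \<delta>0 C in simp)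
    also have "\<dots> = C * (\<beta> / \<delta>) ^ Suc n * k x p" by (simp add: field_simps)
    finally show ?case .
  qed
  have lim: "(\<lambda>n. C * k x p * (\<beta> / \<delta>) ^ n) \<longlonglongrightarrow> C * k x p * 0"
    by (intro tendsto_mult_left LIMSEQ_power_zero) (use \<beta>0 \<beta>\<delta> in simp)
  have "d x \<le> 0"
    by (rule LIMSEQ_le_const[OF lim[simplified]]) (use ind[OF x] in \<open>auto simp: mult_ac\<close>)
  then show ?thesis using db[OF x] by simp
qed

end

lemma Q_iff[simp]: "(x, p) \<in> Q \<longleftrightarrow> 0 \<le> x \<and> 0 \<le> p"
  by (simp add: Q_def)

locale model2 = model +
  assumes A8: "\<And>u. u \<in> CC (kappa G prof b \<delta>) \<Longrightarrow> continuous_on Q (\<lambda>(x, p). \<integral>y. u y p \<partial>G x)"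
begin

abbreviation "T \<equiv> bellman G prof \<beta>"

lemma div_bound1: "0 < (c::real) \<Longrightarrow> \<bar>a / c\<bar> \<le> M \<Longrightarrow> \<bar>a\<bar> \<le> M * c"
  by (simp add: abs_divide abs_of_pos pos_divide_le_eq)
lemma div_bound2: "0 < (c::real) \<Longrightarrow> \<bar>a\<bar> \<le> M * c \<Longrightarrow> \<bar>a / c\<bar> \<le> M"
  by (simp add: abs_divide abs_of_pos pos_divide_le_eq)

lemma k_pos: "0 \<le> x \<Longrightarrow> 0 \<le> p \<Longrightarrow> 0 < k x p"
  using k_ge1 by (meson less_le_trans zero_less_one)

lemma CC_bound:
  assumes v: "v \<in> CC k"
  obtains C where "\<And>x p. 0 \<le> x \<Longrightarrow> 0 \<le> p \<Longrightarrow> \<bar>v x p\<bar> \<le> C * k x p"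
proof -
  from v have "bdd_above ((\<lambda>z. \<bar>v (fst z) (snd z) / k (fst z) (snd z)\<bar>) ` Q)"
    by (simp add: CC_def)
  then obtain M where M0: "\<forall>y \<in> (\<lambda>z. \<bar>v (fst z) (snd z) / k (fst z) (snd z)\<bar>) ` Q. y \<le> M"
    unfolding bdd_above_def by blast
  have M: "\<bar>v (fst z) (snd z) / k (fst z) (snd z)\<bar> \<le> M" if "z \<in> Q" for z
    using M0 that by blast
  have "\<bar>v x p\<bar> \<le> M * k x p" if "0 \<le> x" "0 \<le> p" for x p
  proof -
    have "\<bar>v x p / k x p\<bar> \<le> M" using M[of "(x, p)"] that by simp
    then show ?thesis by (rule div_bound1[OF k_pos[OF that]])
  qed
  then show ?thesis by (rule that)
qed

lemma bound_bdd:
  assumes "\<And>x p. 0 \<le> x \<Longrightarrow> 0 \<le> p \<Longrightarrow> \<bar>f x p\<bar> \<le> C * k x p"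
  shows "bdd_above ((\<lambda>z. \<bar>f (fst z) (snd z) / k (fst z) (snd z)\<bar>) ` Q)"
proof (rule bdd_aboveI2)
  fix z assume "z \<in> Q"
  then obtain x p where z: "z = (x, p)" "0 \<le> x" "0 \<le> p" by (cases z) auto
  show "\<bar>f (fst z) (snd z) / k (fst z) (snd z)\<bar> \<le> C"
    using div_bound2[OF k_pos[OF z(2,3)] assms[OF z(2,3)]] z(1) by simp
qed

lemma knorm_upper:
  assumes "bdd_above ((\<lambda>z. \<bar>f (fst z) (snd z) / k (fst z) (snd z)\<bar>) ` Q)" "0 \<le> x" "0 \<le> p"
  shows "\<bar>f x p\<bar> \<le> knorm k f * k x p"
proof -
  have "\<bar>f x p / k x p\<bar> \<le> knorm k f"
    unfolding knorm_def using cSUP_upper[OF _ assms(1), of "(x, p)"] assms(2,3) by simp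
  then show ?thesis by (rule div_bound1[OF k_pos[OF assms(2,3)]])
qed

lemma knorm_least:
  assumes "\<And>x p. 0 \<le> x \<Longrightarrow> 0 \<le> p \<Longrightarrow> \<bar>f x p\<bar> \<le> c * k x p"
  shows "knorm k f \<le> c"
  unfolding knorm_def
proof (rule cSUP_least)
  show "Q \<noteq> {}" using Q_iff[of 0 0] by blast
  fix z assume "z \<in> Q"
  then obtain x p where z: "z = (x, p)" "0 \<le> x" "0 \<le> p" by (cases z) auto
  show "\<bar>f (fst z) (snd z) / k (fst z) (snd z)\<bar> \<le> c"
    using div_bound2[OF k_pos[OF z(2,3)] assms[OF z(2,3)]] z(1) by simp
qed

lemma knorm_nonneg:
  assumes "bdd_above ((\<lambda>z. \<bar>f (fst z) (snd z) / k (fst z) (snd z)\<bar>) ` Q)"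
  shows "0 \<le> knorm k f"
proof -
  have "\<bar>f 0 0\<bar> \<le> knorm k f * k 0 0" by (rule knorm_upper[OF assms]) auto
  then have "0 \<le> knorm k f * k 0 0" by (meson abs_ge_zero order_trans)
  then show ?thesis using k_pos[of 0 0] by (simp add: zero_le_mult_iff)
qed

lemma prof_bound: "0 \<le> x \<Longrightarrow> 0 \<le> p \<Longrightarrow> \<bar>prof x p\<bar> \<le> (1 + \<bar>b\<bar>) * k x p"
proof -
  assume a: "0 \<le> x" "0 \<le> p"
  have "1 \<le> prof x p + b" "prof x p + b \<le> k x p" "1 \<le> k x p"
    using bb[OF a] k_ge[OF a] k_ge1[OF a] by auto
  moreover have "\<bar>b\<bar> \<le> \<bar>b\<bar> * k x p" using k_ge1[OF a] by (simp add: mult_le_cancel_left1)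
  moreover have e: "(1 + \<bar>b\<bar>) * k x p = k x p + \<bar>b\<bar> * k x p" by (simp add: distrib_right)
  moreover have "b \<le> \<bar>b\<bar>" "- b \<le> \<bar>b\<bar>" by auto
  ultimately show ?thesis unfolding abs_le_iff by (intro conjI; linarith)
qed

lemma CC_meas: "v \<in> CC k \<Longrightarrow> 0 \<le> p \<Longrightarrow> (\<lambda>y. v y p) \<in> borel_measurable Rp"
  by (rule cont2_meas) (simp_all add: CC_def)

lemma CC_incr: "v \<in> CC k \<Longrightarrow> 0 \<le> x \<Longrightarrow> 0 \<le> p \<Longrightarrow> x \<le> x' \<Longrightarrow> p \<le> p' \<Longrightarrow> v x p \<le> v x' p'"
  by (simp add: CC_def incr2_def)

lemma CC_zero: "v \<in> CC k \<Longrightarrow> \<not> (0 \<le> x \<and> 0 \<le> p) \<Longrightarrow> v x p = 0"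
  by (simp add: CC_def)

lemma T_Q: "0 \<le> x \<Longrightarrow> 0 \<le> p \<Longrightarrow> T v x p = prof x p + \<beta> * max 0 (\<integral>y. v y p \<partial>G x)"
  by (simp add: bellman_def)

lemma T_nQ: "\<not> (0 \<le> x \<and> 0 \<le> p) \<Longrightarrow> T v x p = 0"
  unfolding bellman_def by auto

lemma I_mono:
  assumes v: "v \<in> CC k" and a: "0 \<le> x" "0 \<le> p" "x \<le> x'" "p \<le> p'"
  shows "(\<integral>y. v y p \<partial>G x) \<le> (\<integral>y. v y p' \<partial>G x')"
proof -
  obtain C where C: "\<And>x p. 0 \<le> x \<Longrightarrow> 0 \<le> p \<Longrightarrow> \<bar>v x p\<bar> \<le> C * k x p" using CC_bound[OF v] by blast
  have p': "0 \<le> p'" using a by simp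
  have "(\<integral>y. v y p \<partial>G x) \<le> (\<integral>y. v y p' \<partial>G x)"
  proof (rule integral_mono)
    show "integrable (G x) (\<lambda>y. v y p)" by (rule kb_G(1)[OF CC_meas[OF v a(2)] C[OF _ a(2)] a(1) a(2)])
    show "integrable (G x) (\<lambda>y. v y p')" by (rule kb_G(1)[OF CC_meas[OF v p'] C[OF _ p'] a(1) p'])
    fix y assume "y \<in> space (G x)"
    then show "v y p \<le> v y p'" using G_spc[OF a(1)] CC_incr[OF v _ a(2) _ a(4)] by simp
  qed
  also have "\<dots> \<le> (\<integral>y. v y p' \<partial>G x')"
  proof (rule dom_real[OF a(1) a(3) p' CC_meas[OF v p']])
    show "\<And>y. 0 \<le> y \<Longrightarrow> \<bar>v y p'\<bar> \<le> C * k y p'" using C p' by simp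
    show "\<And>y z. 0 \<le> y \<Longrightarrow> y \<le> z \<Longrightarrow> v y p' \<le> v z p'" using CC_incr[OF v] p' by simp
  qed
  finally show ?thesis .
qed

lemma T_CC: assumes v: "v \<in> CC k" shows "T v \<in> CC k"
proof -
  obtain C where C: "\<And>x p. 0 \<le> x \<Longrightarrow> 0 \<le> p \<Longrightarrow> \<bar>v x p\<bar> \<le> C * k x p" using CC_bound[OF v] by blast
  have "cont2 (T v)"
    unfolding cont2_def
  proof (rule continuous_on_eq)
    have c1: "continuous_on Q (\<lambda>z. prof (fst z) (snd z))"
      using pc by (simp add: cont2_def case_prod_unfold)
    have c2: "continuous_on Q (\<lambda>z. \<integral>y. v y (snd z) \<partial>G (fst z))"
      using A8[OF v] by (simp add: case_prod_unfold)
    show "continuous_on Q (\<lambda>z. prof (fst z) (snd z) + \<beta> * max 0 (\<integral>y. v y (snd z) \<partial>G (fst z)))"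
      by (intro continuous_intros c1 c2)
    fix z assume "z \<in> Q"
    then show "prof (fst z) (snd z) + \<beta> * max 0 (\<integral>y. v y (snd z) \<partial>G (fst z)) = (case z of (x, y) \<Rightarrow> T v x y)"
      by (cases z) (simp add: T_Q)
  qed
  moreover have "incr2 (T v)"
    unfolding incr2_def
  proof (intro allI impI)
    fix x p x' p' :: real assume a: "0 \<le> x \<and> 0 \<le> p \<and> x \<le> x' \<and> p \<le> p'"
    then have a': "0 \<le> x'" "0 \<le> p'" by auto
    have "prof x p \<le> prof x' p'" using a sincr_incr[OF pinc] by simp
    moreover have "(\<integral>y. v y p \<partial>G x) \<le> (\<integral>y. v y p' \<partial>G x')" using I_mono[OF v] a by simp
    ultimately show "T v x p \<le> T v x' p'" using a a' \<beta>0
      by (simp add: T_Q add_mono mult_left_mono)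
  qed
  moreover have "bdd_above ((\<lambda>z. \<bar>T v (fst z) (snd z) / k (fst z) (snd z)\<bar>) ` Q)"
  proof (rule bound_bdd)
    fix x p :: real assume a: "0 \<le> x" "0 \<le> p"
    have "\<bar>\<integral>y. v y p \<partial>G x\<bar> \<le> C * k x p / \<delta>" by (rule kb_G(2)[OF CC_meas[OF v a(2)] C[OF _ a(2)] a])
    then have "\<bar>max 0 (\<integral>y. v y p \<partial>G x)\<bar> \<le> C * k x p / \<delta>"
      by (rule order_trans[rotated]) (auto simp: max_def)
    then have "\<beta> * \<bar>max 0 (\<integral>y. v y p \<partial>G x)\<bar> \<le> \<beta> * (C * k x p / \<delta>)"
      using \<beta>0 by (intro mult_left_mono) auto
    moreover have "\<bar>T v x p\<bar> \<le> \<bar>prof x p\<bar> + \<bar>\<beta> * max 0 (\<integral>y. v y p \<partial>G x)\<bar>"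
      unfolding T_Q[OF a] by (rule abs_triangle_ineq)
    moreover have "\<bar>\<beta> * max 0 (\<integral>y. v y p \<partial>G x)\<bar> = \<beta> * \<bar>max 0 (\<integral>y. v y p \<partial>G x)\<bar>"
      using \<beta>0 by (simp add: abs_mult)
    ultimately have "\<bar>T v x p\<bar> \<le> (1 + \<bar>b\<bar>) * k x p + \<beta> * (C * k x p / \<delta>)"
      using prof_bound[OF a] by linarith
    then show "\<bar>T v x p\<bar> \<le> (1 + \<bar>b\<bar> + \<beta> * C / \<delta>) * k x p" by (simp add: algebra_simps)
  qed
  moreover have "\<forall>x y. (x, y) \<notin> Q \<longrightarrow> T v x y = 0" by (simp add: T_nQ)
  ultimately show ?thesis by (simp add: CC_def)
qed

lemma diff_bdd:
  assumes v: "v \<in> CC k" and w: "w \<in> CC k"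
  shows "bdd_above ((\<lambda>z. \<bar>(\<lambda>x y. w x y - v x y) (fst z) (snd z) / k (fst z) (snd z)\<bar>) ` Q)"
proof -
  obtain C1 where C1: "\<And>x p. 0 \<le> x \<Longrightarrow> 0 \<le> p \<Longrightarrow> \<bar>v x p\<bar> \<le> C1 * k x p" using CC_bound[OF v] by blast
  obtain C2 where C2: "\<And>x p. 0 \<le> x \<Longrightarrow> 0 \<le> p \<Longrightarrow> \<bar>w x p\<bar> \<le> C2 * k x p" using CC_bound[OF w] by blast
  show ?thesis
  proof (rule bound_bdd)
    fix x p :: real assume a: "0 \<le> x" "0 \<le> p"
    have "\<bar>w x p - v x p\<bar> \<le> \<bar>w x p\<bar> + \<bar>v x p\<bar>" by (rule abs_triangle_ineq4)
    moreover have "(C1 + C2) * k x p = C1 * k x p + C2 * k x p" by (rule distrib_right)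
    ultimately show "\<bar>w x p - v x p\<bar> \<le> (C1 + C2) * k x p" using C1[OF a] C2[OF a] by linarith
  qed
qed

lemma dk_upper:
  assumes v: "v \<in> CC k" and w: "w \<in> CC k" and x: "0 \<le> x" and p: "0 \<le> p"
  shows "\<bar>w x p - v x p\<bar> \<le> dk k v w * k x p"
proof -
  have "\<bar>(\<lambda>x y. w x y - v x y) x p\<bar> \<le> knorm k (\<lambda>x y. w x y - v x y) * k x p"
    by (rule knorm_upper[OF diff_bdd[OF v w] x p])
  then show ?thesis by (simp add: dk_def)
qed

lemma dk_nonneg: "v \<in> CC k \<Longrightarrow> w \<in> CC k \<Longrightarrow> 0 \<le> dk k v w"
  unfolding dk_def by (rule knorm_nonneg[OF diff_bdd])

lemma dk_least: "(\<And>x p. 0 \<le> x \<Longrightarrow> 0 \<le> p \<Longrightarrow> \<bar>w x p - v x p\<bar> \<le> c * k x p) \<Longrightarrow> dk k v w \<le> c"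
  unfolding dk_def by (rule knorm_least) simp

lemma max_abs: "\<bar>max 0 (a::real) - max 0 c\<bar> \<le> \<bar>a - c\<bar>"
  by (auto simp: max_def abs_if)

lemma T_contr:
  assumes v: "v \<in> CC k" and w: "w \<in> CC k" and a: "0 \<le> x" "0 \<le> p"
  shows "\<bar>T w x p - T v x p\<bar> \<le> (\<beta> / \<delta>) * dk k v w * k x p"
proof -
  let ?D = "dk k v w"
  obtain C1 where C1: "\<And>x p. 0 \<le> x \<Longrightarrow> 0 \<le> p \<Longrightarrow> \<bar>v x p\<bar> \<le> C1 * k x p" using CC_bound[OF v] by blast
  obtain C2 where C2: "\<And>x p. 0 \<le> x \<Longrightarrow> 0 \<le> p \<Longrightarrow> \<bar>w x p\<bar> \<le> C2 * k x p" using CC_bound[OF w] by blast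
  have iv: "integrable (G x) (\<lambda>y. v y p)" by (rule kb_G(1)[OF CC_meas[OF v a(2)] C1[OF _ a(2)] a])
  have iw: "integrable (G x) (\<lambda>y. w y p)" by (rule kb_G(1)[OF CC_meas[OF w a(2)] C2[OF _ a(2)] a])
  have dm: "(\<lambda>y. w y p - v y p) \<in> borel_measurable Rp"
    using CC_meas[OF v a(2)] CC_meas[OF w a(2)] by measurable
  have "\<bar>(\<integral>y. w y p \<partial>G x) - (\<integral>y. v y p \<partial>G x)\<bar> = \<bar>\<integral>y. w y p - v y p \<partial>G x\<bar>"
    by (simp add: Bochner_Integration.integral_diff[OF iw iv])
  also have "\<dots> \<le> ?D * k x p / \<delta>"
    by (rule kb_G(2)[OF dm _ a]) (use dk_upper[OF v w] a in simp)
  finally have I: "\<bar>(\<integral>y. w y p \<partial>G x) - (\<integral>y. v y p \<partial>G x)\<bar> \<le> ?D * k x p / \<delta>" .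
  have "\<bar>max 0 (\<integral>y. w y p \<partial>G x) - max 0 (\<integral>y. v y p \<partial>G x)\<bar> \<le> \<bar>(\<integral>y. w y p \<partial>G x) - (\<integral>y. v y p \<partial>G x)\<bar>"
    by (rule max_abs)
  also note I
  finally have m: "\<bar>max 0 (\<integral>y. w y p \<partial>G x) - max 0 (\<integral>y. v y p \<partial>G x)\<bar> \<le> ?D * k x p / \<delta>" .
  have e: "T w x p - T v x p = \<beta> * (max 0 (\<integral>y. w y p \<partial>G x) - max 0 (\<integral>y. v y p \<partial>G x))"
    unfolding T_Q[OF a] by (simp add: right_diff_distrib)
  have "\<bar>T w x p - T v x p\<bar> = \<beta> * \<bar>max 0 (\<integral>y. w y p \<partial>G x) - max 0 (\<integral>y. v y p \<partial>G x)\<bar>"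
    unfolding e using \<beta>0 by (simp add: abs_mult)
  also have "\<dots> \<le> \<beta> * (?D * k x p / \<delta>)" using mult_left_mono[OF m, of \<beta>] \<beta>0 by simp
  also have "\<dots> = (\<beta> / \<delta>) * ?D * k x p" by simp
  finally show ?thesis .
qed

lemma T_contr_dk: "v \<in> CC k \<Longrightarrow> w \<in> CC k \<Longrightarrow> dk k (T v) (T w) \<le> (\<beta> / \<delta>) * dk k v w"
  by (rule dk_least) (rule T_contr)

end

context model2 begin

lemma unif_cont:
  assumes un: "\<And>n. cont2 (u n)"
    and bd: "\<And>n x p. 0 \<le> x \<Longrightarrow> 0 \<le> p \<Longrightarrow> \<bar>f x p - u n x p\<bar> \<le> e n * k x p"
    and e0: "e \<longlonglongrightarrow> 0" and enn: "\<And>n. 0 \<le> e n"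
  shows "cont2 f"
proof -
  have uc: "continuous_on Q (\<lambda>w. u n (fst w) (snd w))" for n
    using un[of n] by (simp add: cont2_def case_prod_unfold)
  have "continuous (at z within Q) (\<lambda>w. f (fst w) (snd w))" if z: "z \<in> Q" for z
  proof -
    define N where "N = max (fst z) (snd z) + 1"
    define S where "S = {w \<in> Q. fst w < N \<and> snd w < N}"
    define Op where "Op = {w::real\<times>real. fst w < N \<and> snd w < N}"
    have N0: "0 \<le> N" using z by (cases z) (auto simp: N_def)
    define K where "K = k N N"
    have K0: "0 < K" unfolding K_def using k_pos[OF N0 N0] .
    have kK: "k (fst w) (snd w) \<le> K" if "w \<in> S" for w
      using that unfolding K_def S_def by (cases w) (auto intro!: k_mono)
    have ul: "uniform_limit S (\<lambda>n w. u n (fst w) (snd w)) (\<lambda>w. f (fst w) (snd w)) sequentially"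
      unfolding uniform_limit_sequentially_iff
    proof (intro allI impI)
      fix \<epsilon> :: real assume \<epsilon>: "0 < \<epsilon>"
      obtain M where M: "\<And>n. n \<ge> M \<Longrightarrow> norm (e n - 0) < \<epsilon> / K"
        using LIMSEQ_D[OF e0, of "\<epsilon> / K"] \<epsilon> K0 by auto
      show "\<exists>M. \<forall>n\<ge>M. \<forall>w\<in>S. dist (u n (fst w) (snd w)) (f (fst w) (snd w)) < \<epsilon>"
      proof (intro exI allI impI ballI)
        fix n w assume n: "M \<le> n" and w: "w \<in> S"
        have w0: "0 \<le> fst w" "0 \<le> snd w" using w by (cases w; auto simp: S_def)+
        have "dist (u n (fst w) (snd w)) (f (fst w) (snd w)) = \<bar>f (fst w) (snd w) - u n (fst w) (snd w)\<bar>"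
          by (simp add: dist_real_def abs_minus_commute)
        also have "\<dots> \<le> e n * k (fst w) (snd w)" by (rule bd[OF w0])
        also have "\<dots> \<le> e n * K" by (rule mult_left_mono[OF kK[OF w] enn])
        also have "\<dots> < \<epsilon> / K * K" using M[OF n] enn[of n] K0 by (intro mult_strict_right_mono) auto
        also have "\<dots> = \<epsilon>" using K0 by simp
        finally show "dist (u n (fst w) (snd w)) (f (fst w) (snd w)) < \<epsilon>" .
      qed
    qed
    have cS: "continuous_on S (\<lambda>w. f (fst w) (snd w))"
    proof (rule uniform_limit_theorem[OF _ ul])
      show "\<forall>\<^sub>F n in sequentially. continuous_on S (\<lambda>w. u n (fst w) (snd w))"
        by (intro always_eventually allI continuous_on_subset[OF uc]) (auto simp: S_def)
    qed simp
    have zS: "z \<in> S" using z by (cases z) (auto simp: S_def N_def)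
    have oO: "open Op" unfolding Op_def
      by (intro open_Collect_conj open_Collect_less continuous_intros)
    have zO: "z \<in> Op" using zS by (simp add: S_def Op_def)
    have "at z within Q = at z within S"
      by (rule at_within_nhd[OF zO oO]) (auto simp: S_def Op_def)
    moreover have "continuous (at z within S) (\<lambda>w. f (fst w) (snd w))"
      using cS zS by (simp add: continuous_on_eq_continuous_within)
    ultimately show ?thesis by simp
  qed
  then show ?thesis
    unfolding cont2_def case_prod_unfold by (simp add: continuous_on_eq_continuous_within)
qed


lemma zero_CC: "(\<lambda>x p. 0) \<in> CC k"
  unfolding CC_def cont2_def incr2_def
  by (auto intro: bound_bdd[where C=0] simp: case_prod_unfold)

definition c0 where "c0 = \<beta> / \<delta>"

lemma c0: "0 < c0" "c0 < 1"
  using \<beta>0 \<beta>\<delta> \<delta>0 by (auto simp: c0_def)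

definition it where "it n = (T ^^ n) (\<lambda>x p. 0)"

lemma it_CC: "it n \<in> CC k"
  by (induction n) (auto simp: it_def zero_CC T_CC)

lemma it_Suc: "it (Suc n) = T (it n)"
  by (simp add: it_def)

definition D0 where "D0 = dk k (it 0) (it 1)"

lemma D0: "0 \<le> D0" unfolding D0_def by (rule dk_nonneg[OF it_CC it_CC])

lemma dk_it: "dk k (it n) (it (Suc n)) \<le> c0 ^ n * D0"
proof (induction n)
  case 0 then show ?case by (simp add: D0_def)
next
  case (Suc n)
  have "dk k (it (Suc n)) (it (Suc (Suc n))) \<le> c0 * dk k (it n) (it (Suc n))"
    unfolding it_Suc[of "Suc n"] it_Suc[of n] c0_def by (rule T_contr_dk[OF it_CC T_CC[OF it_CC]])
  also have "\<dots> \<le> c0 * (c0 ^ n * D0)" using Suc c0 by (intro mult_left_mono) auto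
  finally show ?case by simp
qed

definition dd where "dd n x p = it (Suc n) x p - it n x p"

lemma dd_bound: "0 \<le> x \<Longrightarrow> 0 \<le> p \<Longrightarrow> \<bar>dd n x p\<bar> \<le> c0 ^ n * D0 * k x p"
proof -
  assume a: "0 \<le> x" "0 \<le> p"
  have "\<bar>dd n x p\<bar> \<le> dk k (it n) (it (Suc n)) * k x p"
    unfolding dd_def by (rule dk_upper[OF it_CC it_CC a])
  also have "\<dots> \<le> c0 ^ n * D0 * k x p"
    using dk_it[of n] k_pos[OF a] by (intro mult_right_mono) auto
  finally show ?thesis .
qed

lemma it0: "it 0 = (\<lambda>x p. 0)" by (simp add: it_def)

lemma it_sum: "it n x p = (\<Sum>i<n. dd i x p)"
  unfolding dd_def by (subst sum_lessThan_telescope) (simp add: it0)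

lemma dd_summable: "summable (\<lambda>n. dd n x p)"
proof (cases "0 \<le> x \<and> 0 \<le> p")
  case True
  show ?thesis
  proof (rule summable_comparison_test')
    show "summable (\<lambda>n. c0 ^ n * (D0 * k x p))"
      by (rule summable_mult2) (use c0 in simp)
    fix n show "norm (dd n x p) \<le> c0 ^ n * (D0 * k x p)" using dd_bound[of x p n] True by (simp add: mult_ac)
  qed
next
  case False
  then have "dd n x p = 0" for n unfolding dd_def using CC_zero[OF it_CC] by simp
  then show ?thesis by simp
qed

definition fp where "fp x p = (\<Sum>n. dd n x p)"

lemma it_conv: "(\<lambda>n. it n x p) \<longlonglongrightarrow> fp x p"
  unfolding it_sum fp_def by (rule summable_LIMSEQ[OF dd_summable])

definition ee where "ee n = c0 ^ n / (1 - c0) * D0"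

lemma ee_nn: "0 \<le> ee n" unfolding ee_def using c0 D0 by simp

lemma ee_lim: "ee \<longlonglongrightarrow> 0"
proof -
  have "(\<lambda>n. c0 ^ n * (D0 / (1 - c0))) \<longlonglongrightarrow> 0 * (D0 / (1 - c0))"
    by (intro tendsto_mult LIMSEQ_power_zero tendsto_const) (use c0 in simp)
  then show ?thesis unfolding ee_def by simp
qed

lemma ee_Suc: "ee (Suc n) = c0 * ee n" by (simp add: ee_def)

lemma tail_bound:
  assumes a: "0 \<le> x" "0 \<le> p"
  shows "\<bar>fp x p - it n x p\<bar> \<le> ee n * k x p"
proof -
  have s: "summable (\<lambda>i. dd i x p)" by (rule dd_summable)
  have e: "fp x p - it n x p = (\<Sum>i. dd (i + n) x p)"
    unfolding fp_def it_sum using suminf_minus_initial_segment[OF s, of n] by simp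
  have g0: "summable (\<lambda>i. c0 ^ i * (D0 * k x p))" by (rule summable_mult2) (use c0 in simp)
  have g: "summable (\<lambda>i. c0 ^ (i + n) * (D0 * k x p))"
    using summable_ignore_initial_segment[OF g0, of n] by simp
  have sa: "summable (\<lambda>i. \<bar>dd (i + n) x p\<bar>)"
  proof (rule summable_rabs_comparison_test[OF _ g])
    show "\<exists>N. \<forall>i\<ge>N. \<bar>dd (i + n) x p\<bar> \<le> c0 ^ (i + n) * (D0 * k x p)"
    proof (intro exI[of _ 0] allI impI)
      fix i :: nat
      show "\<bar>dd (i + n) x p\<bar> \<le> c0 ^ (i + n) * (D0 * k x p)"
        using dd_bound[OF a, of "i + n"] by (simp only: mult.assoc)
    qed
  qed
  have "\<bar>\<Sum>i. dd (i + n) x p\<bar> \<le> (\<Sum>i. \<bar>dd (i + n) x p\<bar>)" by (rule summable_rabs[OF sa])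
  also have "\<dots> \<le> (\<Sum>i. c0 ^ (i + n) * (D0 * k x p))"
  proof (rule suminf_le[OF _ sa g])
    fix i :: nat
    show "\<bar>dd (i + n) x p\<bar> \<le> c0 ^ (i + n) * (D0 * k x p)"
      using dd_bound[OF a, of "i + n"] by (simp only: mult.assoc)
  qed
  also have "\<dots> = (\<Sum>i. c0 ^ i * (c0 ^ n * D0 * k x p))" by (simp add: power_add mult_ac)
  also have "\<dots> = (\<Sum>i. c0 ^ i) * (c0 ^ n * D0 * k x p)"
    by (rule suminf_mult2[symmetric]) (use c0 in simp)
  also have "\<dots> = ee n * k x p" using c0 by (simp add: suminf_geometric ee_def)
  finally show ?thesis unfolding e .
qed

lemma fp_CC: "fp \<in> CC k"
proof -
  have "cont2 fp"
    by (rule unif_cont[of it _ ee]) (use it_CC tail_bound ee_lim ee_nn in \<open>auto simp: CC_def\<close>)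
  moreover have "incr2 fp"
    unfolding incr2_def
  proof (intro allI impI)
    fix x p x' p' :: real assume a: "0 \<le> x \<and> 0 \<le> p \<and> x \<le> x' \<and> p \<le> p'"
    show "fp x p \<le> fp x' p'"
      by (rule LIMSEQ_le[OF it_conv it_conv]) (use a CC_incr[OF it_CC] in auto)
  qed
  moreover have "bdd_above ((\<lambda>z. \<bar>fp (fst z) (snd z) / k (fst z) (snd z)\<bar>) ` Q)"
    by (rule bound_bdd[where C="ee 0"]) (use tail_bound[where n=0] in \<open>simp add: it0\<close>)
  moreover have "\<forall>x y. (x, y) \<notin> Q \<longrightarrow> fp x y = 0"
    using CC_zero[OF it_CC] by (simp add: fp_def dd_def)
  ultimately show ?thesis by (simp add: CC_def)
qed

lemma fp_fix: "T fp = fp"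
proof (intro ext)
  fix x p
  show "T fp x p = fp x p"
  proof (cases "0 \<le> x \<and> 0 \<le> p")
    case False
    then show ?thesis using T_nQ CC_zero[OF fp_CC] by simp
  next
    case True
    then have a: "0 \<le> x" "0 \<le> p" by auto
    have b: "\<bar>T fp x p - fp x p\<bar> \<le> 2 * ee (Suc n) * k x p" for n
    proof -
      have dn: "dk k (it n) fp \<le> ee n"
        by (rule dk_least) (use tail_bound in simp)
      have "\<bar>T fp x p - T (it n) x p\<bar> \<le> c0 * dk k (it n) fp * k x p"
        unfolding c0_def by (rule T_contr[OF it_CC fp_CC a])
      also have "\<dots> \<le> c0 * ee n * k x p"
        using dn c0 k_pos[OF a] by (intro mult_right_mono mult_left_mono) auto
      finally have 1: "\<bar>T fp x p - it (Suc n) x p\<bar> \<le> ee (Suc n) * k x p"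
        by (simp add: it_Suc ee_Suc)
      have 2: "\<bar>fp x p - it (Suc n) x p\<bar> \<le> ee (Suc n) * k x p" by (rule tail_bound[OF a])
      show ?thesis using 1 2 by (simp add: abs_le_iff) 
    qed
    have lim: "(\<lambda>n. 2 * ee (Suc n) * k x p) \<longlonglongrightarrow> 2 * 0 * k x p"
      by (intro tendsto_mult tendsto_const LIMSEQ_Suc[OF ee_lim])
    have "\<bar>T fp x p - fp x p\<bar> \<le> 0"
      using LIMSEQ_le_const[OF lim, of "\<bar>T fp x p - fp x p\<bar>"] b by auto
    then show ?thesis by simp
  qed
qed

lemma fix_unique:
  assumes v: "v \<in> CC k" "T v = v" and w: "w \<in> CC k" "T w = w"
  shows "v = w"
proof -
  have "dk k v w \<le> c0 * dk k v w"
    using T_contr_dk[OF v(1) w(1)] v(2) w(2) by (simp add: c0_def)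
  then have "dk k v w \<le> 0" using c0 dk_nonneg[OF v(1) w(1)]
    by (metis mult_le_cancel_right1 not_le order_le_less_trans)
  show ?thesis
  proof (intro ext)
    fix x p
    show "v x p = w x p"
    proof (cases "0 \<le> x \<and> 0 \<le> p")
      case False
      then show ?thesis using CC_zero[OF v(1)] CC_zero[OF w(1)] by simp
    next
      case True
      have "\<bar>w x p - v x p\<bar> \<le> dk k v w * k x p" using dk_upper[OF v(1) w(1)] True by simp
      also have "\<dots> \<le> 0" using mult_nonpos_nonneg[OF \<open>dk k v w \<le> 0\<close>, of "k x p"] k_pos[of x p] True by simp
      finally show ?thesis by simp
    qed
  qed
qed

end

context model2 begin

lemma fix_eq: "T v = v \<Longrightarrow> 0 \<le> x \<Longrightarrow> 0 \<le> p \<Longrightarrow> v x p = prof x p + \<beta> * max 0 (\<integral>y. v y p \<partial>G x)"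
  by (metis T_Q)

lemma fix_strict:
  assumes v: "v \<in> CC k" "T v = v"
  shows "strict_incr2 v"
  unfolding strict_incr2_def
proof (intro allI impI)
  fix x y x' y' :: real
  assume a: "0 \<le> x \<and> 0 \<le> y \<and> x \<le> x' \<and> y \<le> y' \<and> (x, y) \<noteq> (x', y')"
  then have a': "0 \<le> x'" "0 \<le> y'" by auto
  have 1: "prof x y < prof x' y'" using pinc a unfolding strict_incr2_def by blast
  have "(\<integral>z. v z y \<partial>G x) \<le> (\<integral>z. v z y' \<partial>G x')" using I_mono[OF v(1)] a by simp
  then have 2: "\<beta> * max 0 (\<integral>z. v z y \<partial>G x) \<le> \<beta> * max 0 (\<integral>z. v z y' \<partial>G x')"
    using \<beta>0 by (intro mult_left_mono) auto
  show "v x y < v x' y'"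
    using 1 2 fix_eq[OF v(2)] a a' by simp
qed

lemma fix_neg_p0:
  assumes v: "v \<in> CC k" "T v = v" and x: "0 \<le> x"
  shows "v x 0 < 0"
proof -
  obtain Cv where Cv: "\<And>x p. 0 \<le> x \<Longrightarrow> 0 \<le> p \<Longrightarrow> \<bar>v x p\<bar> \<le> Cv * k x p" using CC_bound[OF v(1)] by blast
  define d where "d y = \<bar>v y 0 - prof y 0\<bar>" for y
  have p0: "(0::real) \<le> 0" by simp
  have vm: "(\<lambda>y. v y 0) \<in> borel_measurable Rp" by (rule CC_meas[OF v(1) p0])
  have pm: "(\<lambda>y. prof y 0) \<in> borel_measurable Rp" by (rule prof_meas[OF p0])
  have dm: "d \<in> borel_measurable Rp" unfolding d_def using vm pm by measurable
  have db: "0 \<le> d y \<and> d y \<le> (Cv + (1 + \<bar>b\<bar>)) * k y 0" if y: "0 \<le> y" for y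
  proof -
    have "d y \<le> \<bar>v y 0\<bar> + \<bar>prof y 0\<bar>" unfolding d_def by (rule abs_triangle_ineq4)
    also have "\<dots> \<le> Cv * k y 0 + (1 + \<bar>b\<bar>) * k y 0" using Cv[OF y p0] prof_bound[OF y p0] by linarith
    finally show ?thesis by (simp add: d_def distrib_right)
  qed
  have vb: "\<And>y. 0 \<le> y \<Longrightarrow> \<bar>v y 0\<bar> \<le> Cv * k y 0" using Cv p0 by blast
  have pb: "\<And>y. 0 \<le> y \<Longrightarrow> \<bar>prof y 0\<bar> \<le> (1 + \<bar>b\<bar>) * k y 0" using prof_bound p0 by blast
  have db': "\<And>y. 0 \<le> y \<Longrightarrow> \<bar>d y\<bar> \<le> (Cv + (1 + \<bar>b\<bar>)) * k y 0" using db by auto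
  have rec: "d z \<le> \<beta> * (\<integral>y. d y \<partial>G z)" if z: "0 \<le> z" for z
  proof -
    have iv: "integrable (G z) (\<lambda>y. v y 0)" by (rule kb_G(1)[OF vm vb z p0])
    have ip: "integrable (G z) (\<lambda>y. prof y 0)" by (rule kb_G(1)[OF pm pb z p0])
    have id: "integrable (G z) d" by (rule kb_G(1)[OF dm db' z p0])
    have Ip: "(\<integral>y. prof y 0 \<partial>G z) \<le> 0"
    proof -
      have "(\<integral>y. prof y 0 \<partial>G z) \<le> (\<integral>y. 0 \<partial>G z)"
        by (rule integral_mono[OF ip]) (auto simp: G_spc[OF z] intro: less_imp_le pneg)
      then show ?thesis by simp
    qed
    have "\<bar>(\<integral>y. v y 0 \<partial>G z) - (\<integral>y. prof y 0 \<partial>G z)\<bar> = \<bar>\<integral>y. v y 0 - prof y 0 \<partial>G z\<bar>"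
      by (simp add: Bochner_Integration.integral_diff[OF iv ip])
    also have "\<dots> \<le> (\<integral>y. d y \<partial>G z)"
      by (rule integral_abs_bound_integral) (use iv ip id in \<open>auto simp: d_def\<close>)
    finally have m: "max 0 (\<integral>y. v y 0 \<partial>G z) \<le> (\<integral>y. d y \<partial>G z)"
      using Ip by (auto simp: max_def abs_le_iff)
    have "d z = \<beta> * max 0 (\<integral>y. v y 0 \<partial>G z)"
      unfolding d_def using fix_eq[OF v(2) z p0] \<beta>0 by (simp add: abs_mult)
    also have "\<dots> \<le> \<beta> * (\<integral>y. d y \<partial>G z)" using m \<beta>0 by (intro mult_left_mono) auto
    finally show ?thesis .
  qed
  have "d x = 0" by (rule vanish[OF p0 dm db rec x])
  then show ?thesis using pneg[OF x p0] by (simp add: d_def)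
qed


lemma fix_neg_x0:
  assumes v: "v \<in> CC k" "T v = v" and p: "0 \<le> p"
    and A6: "\<And>p. 0 \<le> p \<Longrightarrow> (\<Sum>t. \<beta> ^ t * (\<integral>y. prof y p \<partial>kpow G t 0)) \<le> 0"
  shows "v 0 p < 0"
proof (cases "(\<integral>y. v y p \<partial>G 0) \<le> 0")
  case True
  then show ?thesis using fix_eq[OF v(2), of 0 p] p pneg[of 0 p] by (simp add: max_def)
next
  case False
  define I where "I y = (\<integral>z. v z p \<partial>G y)" for y
  obtain Cv where Cv: "\<And>x p. 0 \<le> x \<Longrightarrow> 0 \<le> p \<Longrightarrow> \<bar>v x p\<bar> \<le> Cv * k x p" using CC_bound[OF v(1)] by blast
  have z0: "(0::real) \<le> 0" by simp
  have vm: "(\<lambda>y. v y p) \<in> borel_measurable Rp" by (rule CC_meas[OF v(1) p])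
  have vb: "\<And>y. 0 \<le> y \<Longrightarrow> \<bar>v y p\<bar> \<le> Cv * k y p" using Cv p by blast
  have Im: "I \<in> borel_measurable Rp" unfolding I_def by (rule intG_meas[OF vm])
  have Ib: "\<And>y. 0 \<le> y \<Longrightarrow> \<bar>I y\<bar> \<le> (Cv / \<delta>) * k y p"
    unfolding I_def using kb_G(2)[OF vm vb _ p] by simp
  have hv: "v y p = prof y p + \<beta> * I y" if y: "0 \<le> y" for y
  proof -
    have "I 0 \<le> I y" unfolding I_def by (rule I_mono[OF v(1)]) (use y p in auto)
    then have "0 < I y" using False by (simp add: I_def)
    then show ?thesis using fix_eq[OF v(2) y p] by (simp add: I_def)
  qed
  define P where "P t = (\<integral>y. prof y p \<partial>kpow G t 0)" for t
  define V where "V n = (\<integral>y. v y p \<partial>kpow G n 0)" for n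
  have step: "V n = P n + \<beta> * V (Suc n)" for n
  proof -
    have "V (Suc n) = (\<integral>y. I y \<partial>kpow G n 0)"
      unfolding V_def I_def by (rule bind_int[OF z0 p vm vb])
    moreover have "V n = (\<integral>y. prof y p + \<beta> * I y \<partial>kpow G n 0)"
      unfolding V_def by (rule Bochner_Integration.integral_cong[OF refl]) (use hv kpow_spc[OF z0] in auto)
    moreover have "(\<integral>y. prof y p + \<beta> * I y \<partial>kpow G n 0) = P n + \<beta> * (\<integral>y. I y \<partial>kpow G n 0)"
    proof -
      have i1: "integrable (kpow G n 0) (\<lambda>y. prof y p)" by (rule kint[OF z0 p])
      have i2: "integrable (kpow G n 0) I" by (rule kb_pow(1)[OF Im Ib z0 p])
      show ?thesis unfolding P_def using i1 i2 by simp
    qed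
    ultimately show ?thesis by simp
  qed
  have part: "v 0 p = (\<Sum>t<n. \<beta> ^ t * P t) + \<beta> ^ n * V n" for n
  proof (induction n)
    case 0
    have "V 0 = v 0 p" unfolding V_def by (simp add: integral_return vm)
    then show ?case by simp
  next
    case (Suc n)
    then show ?case using step[of n] by (simp add: algebra_simps)
  qed
  have Vb: "\<bar>\<beta> ^ n * V n\<bar> \<le> Cv * k 0 p * c0 ^ n" for n
  proof -
    have "\<bar>V n\<bar> \<le> Cv * k 0 p / \<delta> ^ n" unfolding V_def by (rule kb_pow(2)[OF vm vb z0 p])
    then have "\<beta> ^ n * \<bar>V n\<bar> \<le> \<beta> ^ n * (Cv * k 0 p / \<delta> ^ n)"
      using \<beta>0 by (intro mult_left_mono) auto
    moreover have "\<beta> ^ n * (Cv * k 0 p / \<delta> ^ n) = Cv * k 0 p * c0 ^ n"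
      by (simp add: c0_def power_divide)
    ultimately show ?thesis using \<beta>0 by (simp add: abs_mult)
  qed
  have V0: "(\<lambda>n. \<beta> ^ n * V n) \<longlonglongrightarrow> 0"
  proof (rule Lim_null_comparison)
    show "\<forall>\<^sub>F n in sequentially. norm (\<beta> ^ n * V n) \<le> Cv * k 0 p * c0 ^ n" using Vb by simp
    have "(\<lambda>n. Cv * k 0 p * c0 ^ n) \<longlonglongrightarrow> Cv * k 0 p * 0"
      by (intro tendsto_mult tendsto_const LIMSEQ_power_zero) (use c0 in simp)
    then show "(\<lambda>n. Cv * k 0 p * c0 ^ n) \<longlonglongrightarrow> 0" by simp
  qed
  have "(\<lambda>n. v 0 p - \<beta> ^ n * V n) \<longlonglongrightarrow> v 0 p - 0"
    by (intro tendsto_diff tendsto_const V0)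
  moreover have "(\<lambda>n. v 0 p - \<beta> ^ n * V n) = (\<lambda>n. \<Sum>t<n. \<beta> ^ t * P t)"
    using part by (auto simp: fun_eq_iff algebra_simps)
  ultimately have sP: "(\<lambda>t. \<beta> ^ t * P t) sums v 0 p"
    unfolding sums_def by simp
  define p1 where "p1 = p + 1"
  have p1: "0 \<le> p1" "p < p1" using p by (auto simp: p1_def)
  define P' where "P' t = (\<integral>y. prof y p1 \<partial>kpow G t 0)" for t
  have sum': "summable (\<lambda>t. \<beta> ^ t * P' t)"
  proof (rule summable_comparison_test')
    show "summable (\<lambda>t. \<delta> ^ t * H t 0 p1 + \<bar>b\<bar> * \<beta> ^ t)"
      using k_sums[OF z0 p1(1)] \<beta>0 \<beta>\<delta> \<delta>1
      by (intro summable_add summable_mult summable_geometric) (auto simp: sums_iff)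
    fix t :: nat
    have e: "P' t = H t 0 p1 - b"
    proof -
      interpret prob_space "kpow G t 0" using kpow_prob[OF z0] .
      show ?thesis unfolding P'_def H_def using kint[OF z0 p1(1)] by (simp add: prob_space)
    qed
    have H1: "1 \<le> H t 0 p1" by (rule H_ge1[OF z0 p1(1)])
    have bd: "\<beta> ^ t \<le> \<delta> ^ t" using \<beta>0 \<beta>\<delta> by (intro power_mono) auto
    have "\<bar>\<beta> ^ t * P' t\<bar> = \<beta> ^ t * \<bar>H t 0 p1 - b\<bar>" using \<beta>0 e by (simp add: abs_mult)
    also have "\<dots> \<le> \<beta> ^ t * (H t 0 p1 + \<bar>b\<bar>)" using \<beta>0 H1 by (intro mult_left_mono) auto
    also have "\<dots> = \<beta> ^ t * H t 0 p1 + \<bar>b\<bar> * \<beta> ^ t" by (simp add: algebra_simps)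
    also have "\<dots> \<le> \<delta> ^ t * H t 0 p1 + \<bar>b\<bar> * \<beta> ^ t" using bd H1 by (intro add_right_mono mult_right_mono) auto
    finally show "norm (\<beta> ^ t * P' t) \<le> \<delta> ^ t * H t 0 p1 + \<bar>b\<bar> * \<beta> ^ t" by simp
  qed
  have sum: "summable (\<lambda>t. \<beta> ^ t * P t)" using sP by (simp add: sums_iff)
  have le: "P t \<le> P' t" for t
    unfolding P_def P'_def
    by (rule integral_mono[OF kint[OF z0 p] kint[OF z0 p1(1)]])
       (use p p1 kpow_spc[OF z0] in \<open>auto intro: sincr_incr[OF pinc]\<close>)
  have P0: "P 0 = prof 0 p" "P' 0 = prof 0 p1"
    unfolding P_def P'_def by (simp_all add: integral_return prof_meas p p1)
  have strict: "prof 0 p < prof 0 p1" using pinc p p1 unfolding strict_incr2_def by auto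
  have sd: "summable (\<lambda>t. \<beta> ^ t * P' t - \<beta> ^ t * P t)" by (rule summable_diff[OF sum' sum])
  have "(\<Sum>t\<in>{0}. \<beta> ^ t * P' t - \<beta> ^ t * P t) \<le> (\<Sum>t. \<beta> ^ t * P' t - \<beta> ^ t * P t)"
  proof (rule sum_le_suminf[OF sd])
    fix t show "0 \<le> \<beta> ^ t * P' t - \<beta> ^ t * P t" using le[of t] \<beta>0 by (simp add: mult_left_mono)
  qed simp
  then have "prof 0 p1 - prof 0 p \<le> (\<Sum>t. \<beta> ^ t * P' t) - (\<Sum>t. \<beta> ^ t * P t)"
    using P0 suminf_diff[OF sum' sum] by simp
  moreover have "(\<Sum>t. \<beta> ^ t * P' t) \<le> 0" unfolding P'_def by (rule A6[OF p1(1)])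
  moreover have "(\<Sum>t. \<beta> ^ t * P t) = v 0 p" using sP by (simp add: sums_iff)
  ultimately show ?thesis using strict by linarith
qed

end

theorem lemma1:
  fixes D :: "real \<Rightarrow> real"
    and prof q :: "real \<Rightarrow> real \<Rightarrow> real"
    and G :: "real \<Rightarrow> real measure"
    and \<gamma> :: "real measure"
    and r \<beta> \<delta> ce b :: real
  assumes
    \<comment> \<open>(A1)\<close>
    A1_cont: "continuous_on {0<..} D"
    and A1_dec: "strict_antimono_on {0<..} D"
    and A1_zero: "filterlim D at_top (at_right 0)"
    and A1_inf: "(D \<longlongrightarrow> 0) at_top"
    \<comment> \<open>(A2)\<close>
    and A2_cont: "cont2 prof" "cont2 q"
    and A2_incr: "strict_incr2 prof" "strict_incr2 q"
    and A2_qnn: "\<And>x p. 0 \<le> x \<Longrightarrow> 0 \<le> p \<Longrightarrow> 0 \<le> q x p"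
    and A2_neg: "\<And>x p. 0 \<le> x \<Longrightarrow> 0 \<le> p \<Longrightarrow> x = 0 \<or> p = 0 \<Longrightarrow> prof x p < 0"
    \<comment> \<open>(A3)\<close>
    and A3_kernel: "G \<in> Rp \<rightarrow>\<^sub>M prob_algebra Rp"
    and A3_mono: "\<And>a x x'. 0 \<le> a \<Longrightarrow> 0 \<le> x \<Longrightarrow> x \<le> x' \<Longrightarrow>
                   measure (G x') {0..a} \<le> measure (G x) {0..a}"
    and A3a: "\<And>a x. 0 < a \<Longrightarrow> 0 \<le> x \<Longrightarrow> \<exists>n\<ge>1. measure (kpow G n x) {0..<a} > 0"
    and A3b: "\<And>p. 0 < p \<Longrightarrow> \<exists>x\<ge>0. (\<integral>y. prof y p \<partial>G x) \<ge> 0"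
    and r_pos: "0 < r"
    and \<beta>_def: "\<beta> = 1 / (1 + r)"
    \<comment> \<open>(A4)\<close>
    and A4_prob: "\<gamma> \<in> space (prob_algebra Rp)"
    and A4_int: "\<And>p. 0 \<le> p \<Longrightarrow> integrable \<gamma> (\<lambda>x. q x p)"
    and A4_pos: "\<And>a. 0 < a \<Longrightarrow> measure \<gamma> {0..a} > 0"
    and ce_pos: "0 < ce"
    \<comment> \<open>(A5)\<close>
    and A5: "\<exists>p>0. (\<integral>x. prof x p \<partial>\<gamma>) \<ge> ce"
    \<comment> \<open>(A6)\<close>
    and A6: "\<And>p. 0 \<le> p \<Longrightarrow> (\<Sum>t. \<beta> ^ t * (\<integral>y. prof y p \<partial>kpow G t 0)) \<le> 0"
    \<comment> \<open>(A7)\<close>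
    and A7_\<delta>: "\<beta> < \<delta>" "\<delta> < 1"
    and A7_int: "\<And>p t. 0 \<le> p \<Longrightarrow> integrable (\<gamma> \<bind> kpow G t) (\<lambda>y. prof y p)"
    and A7_sum: "\<And>p. 0 \<le> p \<Longrightarrow> summable (\<lambda>t. \<delta> ^ t * (\<integral>y. prof y p \<partial>(\<gamma> \<bind> kpow G t)))"
    \<comment> \<open>the constant b and finiteness of kappa\<close>
    and b_bound: "\<And>x p. 0 \<le> x \<Longrightarrow> 0 \<le> p \<Longrightarrow> prof x p + b \<ge> 1"
    and kappa_int: "\<And>x p t. 0 \<le> x \<Longrightarrow> 0 \<le> p \<Longrightarrow> integrable (kpow G t x) (\<lambda>y. prof y p)"
    and kappa_fin: "\<And>x p. 0 \<le> x \<Longrightarrow> 0 \<le> p \<Longrightarrow>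
                      summable (\<lambda>t. \<delta> ^ t * (\<integral>y. prof y p + b \<partial>kpow G t x))"
    \<comment> \<open>(A8)\<close>
    and A8: "\<And>u. u \<in> CC (kappa G prof b \<delta>) \<Longrightarrow> continuous_on Q (\<lambda>(x, p). \<integral>y. u y p \<partial>G x)"
  shows "(\<forall>v\<in>CC (kappa G prof b \<delta>). bellman G prof \<beta> v \<in> CC (kappa G prof b \<delta>))
       \<and> (\<exists>c. 0 \<le> c \<and> c < 1 \<and> (\<forall>v\<in>CC (kappa G prof b \<delta>). \<forall>w\<in>CC (kappa G prof b \<delta>).
            dk (kappa G prof b \<delta>) (bellman G prof \<beta> v) (bellman G prof \<beta> w)
              \<le> c * dk (kappa G prof b \<delta>) v w))
       \<and> (\<exists>!v. v \<in> CC (kappa G prof b \<delta>) \<and> bellman G prof \<beta> v = v)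
       \<and> (\<forall>v. v \<in> CC (kappa G prof b \<delta>) \<and> bellman G prof \<beta> v = v \<longrightarrow>
            strict_incr2 v \<and> (\<forall>x p. 0 \<le> x \<and> 0 \<le> p \<and> (x = 0 \<or> p = 0) \<longrightarrow> v x p < 0))"
proof -
  interpret M: model2 G prof b \<delta> \<beta>
  proof (unfold_locales)
    show "G \<in> Rp \<rightarrow>\<^sub>M prob_algebra Rp" by (rule A3_kernel)
    show "\<And>a x x'. 0 \<le> a \<Longrightarrow> 0 \<le> x \<Longrightarrow> x \<le> x' \<Longrightarrow> measure (G x') {0..a} \<le> measure (G x) {0..a}"
      by (rule A3_mono)
    show "cont2 prof" by (rule A2_cont(1))
    show "strict_incr2 prof" by (rule A2_incr(1))
    show "\<And>x p. 0 \<le> x \<Longrightarrow> 0 \<le> p \<Longrightarrow> x = 0 \<or> p = 0 \<Longrightarrow> prof x p < 0" by (rule A2_neg)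
    show "\<And>x p. 0 \<le> x \<Longrightarrow> 0 \<le> p \<Longrightarrow> prof x p + b \<ge> 1" by (rule b_bound)
    show "\<And>x p t. 0 \<le> x \<Longrightarrow> 0 \<le> p \<Longrightarrow> integrable (kpow G t x) (\<lambda>y. prof y p)" by (rule kappa_int)
    show "\<And>x p. 0 \<le> x \<Longrightarrow> 0 \<le> p \<Longrightarrow> summable (\<lambda>t. \<delta> ^ t * (\<integral>y. prof y p + b \<partial>kpow G t x))"
      by (rule kappa_fin)
    show "0 < \<beta>" using r_pos \<beta>_def by simp
    show "\<beta> < \<delta>" "\<delta> < 1" by (rule A7_\<delta>(1), rule A7_\<delta>(2))
    show "\<And>u. u \<in> CC (kappa G prof b \<delta>) \<Longrightarrow> continuous_on Q (\<lambda>(x, p). \<integral>y. u y p \<partial>G x)" by (rule A8)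
  qed
  have 1: "\<forall>v\<in>CC (kappa G prof b \<delta>). bellman G prof \<beta> v \<in> CC (kappa G prof b \<delta>)"
    using M.T_CC by blast
  have 2: "\<exists>c. 0 \<le> c \<and> c < 1 \<and> (\<forall>v\<in>CC (kappa G prof b \<delta>). \<forall>w\<in>CC (kappa G prof b \<delta>).
            dk (kappa G prof b \<delta>) (bellman G prof \<beta> v) (bellman G prof \<beta> w)
              \<le> c * dk (kappa G prof b \<delta>) v w)"
    using M.T_contr_dk M.c0 unfolding M.c0_def by (intro exI[of _ "\<beta> / \<delta>"]) auto
  have 3: "\<exists>!v. v \<in> CC (kappa G prof b \<delta>) \<and> bellman G prof \<beta> v = v"
    using M.fp_CC M.fp_fix M.fix_unique by blast
  have 4: "\<forall>v. v \<in> CC (kappa G prof b \<delta>) \<and> bellman G prof \<beta> v = v \<longrightarrow>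
            strict_incr2 v \<and> (\<forall>x p. 0 \<le> x \<and> 0 \<le> p \<and> (x = 0 \<or> p = 0) \<longrightarrow> v x p < 0)"
  proof (intro allI impI conjI)
    fix v assume v: "v \<in> CC (kappa G prof b \<delta>) \<and> bellman G prof \<beta> v = v"
    show "strict_incr2 v" using M.fix_strict v by blast
    fix x p :: real assume a: "0 \<le> x \<and> 0 \<le> p \<and> (x = 0 \<or> p = 0)"
    show "v x p < 0"
    proof (cases "x = 0")
      case True
      then show ?thesis using M.fix_neg_x0[of v p] v a A6 by blast
    next
      case False
      then have "p = 0" using a by simp
      then show ?thesis using M.fix_neg_p0[of v x] v a by blast
    qed
  qed
  show ?thesis using 1 2 3 4 by blast
qed

end
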